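(* Fix $N\geq2$ and let $R_m^G$ and $R_m^D$ be the effective resistances of the graphs $G_m$ and $D_m$ described in the context. Then for all $m\geq 1$, $R_m^G=2R_m^D$.
   Context: Let $N\geq2$, $\Lambda=\{0,\dots,4N-1\}$, indices modulo $4N$, $C_j=\exp\frac{(2j-1)i\pi}{4N}$, $F_0$ the convex hull of the $C_j$, $r=(1+\cot(\pi/4N))^{-1}$, $\phi_j(x)=r(x-C_j)+C_j$, $\Phi(A)=\bigcup_j\phi_j(A)$, $F_m=\Phi^m(F_0)$. Let $L_j$ be the segment from $C_j$ to $C_{j+1}$, $A_m=F_m\cap\bigcup_{k=0}^{N-1}L_{4k}$, $B_m=F_m\cap\bigcup_{k=0}^{N-1}L_{4k+2}$. Let $\theta(z)=ze^{i\pi/2N}$. Define $\psi_j(z)=\phi_j\circ\theta^j(z)$ if $j$ is even and $\psi_j(z)=\phi_j\circ\theta^{j-1}(\bar z)$ if $j$ is odd. If $N$ is even let $\tilde\psi_{3N-1}(z)=\phi_{3N-1}\circ\theta^{3N-1}(z)$, $\tilde\psi_{3N}(z)=\phi_{3N}\circ\theta^{3N-1}(\bar z)$, and $\tilde\psi_j=\psi_j$ for other $j$; if $N$ is odd let $\tilde\psi_N(z)=\phi_N\circ\theta^N(z)$, $\tilde\psi_{N+1}(z)=\phi_{N+1}\circ\theta^N(\bar z)$, and $\tilde\psi_j=\psi_j$ for other $j$. For a word $w=w_1\cdots w_m\in\Lambda^m$ set $\psi_w=\psi_{w_1}\circ\tilde\psi_{w_2}\circ\cdots\circ\tilde\psi_{w_m}$.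 The graph $G_0$ has vertices $0$ and the midpoints $\frac12(C_j+C_{j+1})$ for $j=0,N,3N-1$, with one edge from $0$ to each of the other three vertices. The graph $D_0$ has vertices $0,C_0,C_1,C_N,C_{N+1},C_{3N-1},C_{3N}$ with one edge from $0$ to each of the other six. For $m\ge1$, $G_m$ (resp. $D_m$) is the graph whose vertex set is the union over $|w|=m$ of the images under $\psi_w$ of the vertices of $G_0$ (resp. $D_0$), coincident points being identified, and whose edges are the images under $\psi_w$ of the edges of $G_0$ (resp. $D_0$). Each edge has conductance $1$. For a graph $H$ among these, its effective resistance $R$ is defined by $R^{-1}=\inf\{\sum_{\text{edges }\{x,y\}}(u(x)-u(y))^2: u=0 \text{ at vertices in } A_m,\ u=1\text{ at vertices in } B_m\}$; write $R_m^G$ for $H=G_m$ and $R_m^D$ for $H=D_m$. *)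

theory Defs
  imports "HOL-Analysis.Analysis"
begin

(* Vertices C_j of the regular 4N-gon; the formula is 4N-periodic in j. *)
definition vC :: "nat \<Rightarrow> nat \<Rightarrow> complex" where
  "vC N j = exp (\<i> * complex_of_real ((2 * real j - 1) * pi / (4 * real N)))"

definition Lam :: "nat \<Rightarrow> nat set" where
  "Lam N = {0..<4*N}"

definition F0 :: "nat \<Rightarrow> complex set" where
  "F0 N = convex hull (vC N ` Lam N)"

definition ratio :: "nat \<Rightarrow> real" where
  "ratio N = 1 / (1 + cot (pi / (4 * real N)))"

definition phi :: "nat \<Rightarrow> nat \<Rightarrow> complex \<Rightarrow> complex" where
  "phi N j x = complex_of_real (ratio N) * (x - vC N j) + vC N j"

definition Phi :: "nat \<Rightarrow> complex set \<Rightarrow> complex set" where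
  "Phi N A = (\<Union>j\<in>Lam N. phi N j ` A)"

definition Fm :: "nat \<Rightarrow> nat \<Rightarrow> complex set" where
  "Fm N m = (Phi N ^^ m) (F0 N)"

definition seg :: "nat \<Rightarrow> nat \<Rightarrow> complex set" where
  "seg N j = closed_segment (vC N j) (vC N (j + 1))"

definition Aset :: "nat \<Rightarrow> nat \<Rightarrow> complex set" where
  "Aset N m = Fm N m \<inter> (\<Union>k<N. seg N (4 * k))"

definition Bset :: "nat \<Rightarrow> nat \<Rightarrow> complex set" where
  "Bset N m = Fm N m \<inter> (\<Union>k<N. seg N (4 * k + 2))"

definition theta :: "nat \<Rightarrow> complex \<Rightarrow> complex" where
  "theta N z = z * exp (\<i> * complex_of_real (pi / (2 * real N)))"

definition psi :: "nat \<Rightarrow> nat \<Rightarrow> complex \<Rightarrow> complex" where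
  "psi N j z = (if even j then phi N j ((theta N ^^ j) z)
                else phi N j ((theta N ^^ (j - 1)) (cnj z)))"

definition psit :: "nat \<Rightarrow> nat \<Rightarrow> complex \<Rightarrow> complex" where
  "psit N j z =
    (if even N then
       (if j = 3 * N - 1 then phi N j ((theta N ^^ (3 * N - 1)) z)
        else if j = 3 * N then phi N j ((theta N ^^ (3 * N - 1)) (cnj z))
        else psi N j z)
     else
       (if j = N then phi N j ((theta N ^^ N) z)
        else if j = N + 1 then phi N j ((theta N ^^ N) (cnj z))
        else psi N j z))"

fun psitw :: "nat \<Rightarrow> nat list \<Rightarrow> complex \<Rightarrow> complex" where
  "psitw N [] = id"
| "psitw N (j # ws) = psit N j \<circ> psitw N ws"

fun psiw :: "nat \<Rightarrow> nat list \<Rightarrow> complex \<Rightarrow> complex" where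
  "psiw N [] = id"
| "psiw N (j # ws) = psi N j \<circ> psitw N ws"

definition words :: "nat \<Rightarrow> nat \<Rightarrow> nat list set" where
  "words N m = {w. length w = m \<and> set w \<subseteq> Lam N}"

definition VG0 :: "nat \<Rightarrow> complex set" where
  "VG0 N = insert 0 ((\<lambda>j. (vC N j + vC N (j + 1)) / 2) ` {0, N, 3 * N - 1})"

definition EG0 :: "nat \<Rightarrow> (complex \<times> complex) set" where
  "EG0 N = (\<lambda>j. (0, (vC N j + vC N (j + 1)) / 2)) ` {0, N, 3 * N - 1}"

definition VD0 :: "nat \<Rightarrow> complex set" where
  "VD0 N = insert 0 (vC N ` {0, 1, N, N + 1, 3 * N - 1, 3 * N})"

definition ED0 :: "nat \<Rightarrow> (complex \<times> complex) set" where
  "ED0 N = (\<lambda>j. (0, vC N j)) ` {0, 1, N, N + 1, 3 * N - 1, 3 * N}"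

(* level-m graph generated from (V0, E0): vertices are points of the plane
   (coincident points identified automatically); edges are the images of the
   edges of the initial graph under all psi_w, |w| = m, each with conductance 1 *)
definition Vm :: "nat \<Rightarrow> complex set \<Rightarrow> nat \<Rightarrow> complex set" where
  "Vm N V0 m = (\<Union>w\<in>words N m. psiw N w ` V0)"

definition Em :: "nat \<Rightarrow> (complex \<times> complex) set \<Rightarrow> nat \<Rightarrow> (complex \<times> complex) set" where
  "Em N E0 m = (\<lambda>(w, e). (psiw N w (fst e), psiw N w (snd e))) ` (words N m \<times> E0)"

definition energy :: "(complex \<times> complex) set \<Rightarrow> (complex \<Rightarrow> real) \<Rightarrow> real" where
  "energy E u = (\<Sum>(x, y)\<in>E. (u x - u y)\<^sup>2)"

definition eff_res :: "nat \<Rightarrow> complex set \<Rightarrow> (complex \<times> complex) set \<Rightarrow> nat \<Rightarrow> real" where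
  "eff_res N V0 E0 m = 1 / Inf {energy (Em N E0 m) u | u.
      (\<forall>x\<in>Vm N V0 m \<inter> Aset N m. u x = 0) \<and> (\<forall>x\<in>Vm N V0 m \<inter> Bset N m. u x = 1)}"

definition RG :: "nat \<Rightarrow> nat \<Rightarrow> real" where
  "RG N m = eff_res N (VG0 N) (EG0 N) m"

definition RD :: "nat \<Rightarrow> nat \<Rightarrow> real" where
  "RD N m = eff_res N (VD0 N) (ED0 N) m"

end

theory Submission
  imports Defs
begin

locale NN =
  fixes N :: nat
  assumes N2: "2 \<le> N"
begin

definition E :: "int \<Rightarrow> complex" where
  "E k = exp (\<i> * complex_of_real (real_of_int k * pi / (4 * real N)))"

lemma Npos: "0 < real N" using N2 by simp

lemma E_add: "E (a + b) = E a * E b"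
  unfolding E_def by (simp add: exp_add[symmetric] distrib_left add_divide_distrib algebra_simps)

lemma E_0[simp]: "E 0 = 1" by (simp add: E_def)

lemma E_mult8N: "E ((8 * int N) * t) = 1"
proof -
  have "E ((8 * int N) * t) = exp (\<i> * (of_int t * (of_real pi * 2)))"
    unfolding E_def using Npos by (simp add: field_simps)
  also have "\<dots> = 1" by (rule exp_2pi_1_int)
  finally show ?thesis .
qed

lemma E_mod: "E k = E (k mod (8 * int N))"
proof -
  have "k = k mod (8 * int N) + (8 * int N) * (k div (8 * int N))" by simp
  then show ?thesis by (metis E_add E_mult8N mult_1_right)
qed

lemma E_cong: "k mod (8 * int N) = k' mod (8 * int N) \<Longrightarrow> E k = E k'"
  by (metis E_mod)

lemma E_cnj: "cnj (E k) = E (- k)"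
  unfolding E_def by (simp add: exp_cnj)

lemma E_cis: "E k = cis (real_of_int k * pi / (4 * real N))"
  unfolding E_def by (simp add: cis_conv_exp)

lemma E_norm[simp]: "norm (E k) = 1"
  by (simp add: E_cis)

lemma E_Re: "Re (E k) = cos (real_of_int k * pi / (4 * real N))"
  by (simp add: E_cis)

lemma E_Im: "Im (E k) = sin (real_of_int k * pi / (4 * real N))"
  by (simp add: E_cis)

lemma E_nz[simp]: "E k \<noteq> 0"
  by (simp add: E_def)

lemma E_2N: "E (2 * int N) = \<i>"
proof -
  have "real_of_int (2 * int N) * pi / (4 * real N) = pi / 2" using Npos by (simp add: field_simps)
  then show ?thesis using N2 by (simp add: E_cis)
qed

lemma E_4N: "E (4 * int N) = -1"
proof -
  have "real_of_int (4 * int N) * pi / (4 * real N) = pi" using Npos by (simp add: field_simps)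
  then show ?thesis by (simp add: E_cis)
qed

lemma E_neg: "E (- k) = inverse (E k)"
  by (metis E_add E_0 add.right_inverse E_nz inverse_unique)

lemma vC_E: "vC N j = E (2 * int j - 1)"
  unfolding vC_def E_def by (simp add: of_int_diff)

lemma theta_E: "theta N z = E 2 * z"
  unfolding theta_def E_def using Npos by (simp add: field_simps)

lemma theta_pow: "(theta N ^^ n) z = E (2 * int n) * z"
proof (induction n arbitrary: z)
  case 0 then show ?case by simp
next
  case (Suc n)
  have "E (2 * int (Suc n)) = E 2 * E (2 * int n)"
    by (metis E_add add.commute distrib_left mult.right_neutral of_nat_Suc)
  then show ?case using Suc by (simp add: theta_E)
qed

definition sn :: real where "sn = sin (pi / (4 * real N))"
definition cs :: real where "cs = cos (pi / (4 * real N))"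
abbreviation r :: real where "r \<equiv> ratio N"

lemma ang_bounds: "0 < pi / (4 * real N)" "pi / (4 * real N) < pi / 4"
  using Npos N2 by (auto simp: field_simps)

lemma sn_pos: "0 < sn"
  unfolding sn_def using ang_bounds by (intro sin_gt_zero) auto

lemma cs_pos: "0 < cs"
  unfolding cs_def using ang_bounds by (intro cos_gt_zero) auto

lemma sn_lt_cs: "sn < cs"
proof -
  have "sin (pi / (4 * real N)) < sin (pi/2 - pi / (4 * real N))"
    using ang_bounds by (intro sin_monotone_2pi) auto
  then show ?thesis by (simp add: sn_def cs_def sin_cos_eq)
qed

lemma r_eq: "r = sn / (sn + cs)"
proof -
  have "ratio N = 1 / (1 + cs / sn)" unfolding ratio_def cot_def cs_def sn_def by simp
  then show ?thesis using sn_pos cs_pos by (simp add: field_simps)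
qed

lemma r_pos: "0 < r" using r_eq sn_pos cs_pos by simp
lemma r_half: "r < 1/2"
proof -
  have "sn / (sn + cs) < 1/2" using sn_pos cs_pos sn_lt_cs by (simp add: divide_simps)
  then show ?thesis using r_eq by simp
qed
lemma r_lt1: "r < 1" using r_half by simp
lemma r_key: "r * cs = (1 - r) * sn"
  using r_eq sn_pos cs_pos by (simp add: field_simps)

lemma E_1: "E 1 = complex_of_real cs + \<i> * complex_of_real sn"
  by (simp add: E_cis cs_def sn_def complex_eq_iff)
lemma E_m1: "E (-1) = complex_of_real cs - \<i> * complex_of_real sn"
  by (simp add: E_cis cs_def sn_def complex_eq_iff)

lemma KEY:
  assumes "e = 1 \<or> e = -1"
  shows "of_real r * E (x + 2 * int N + e) + (1 - of_real r) * E (x - 1)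
       = of_real r * E (x - 2 * int N - e) + (1 - of_real r) * E (x + 1)"
proof -
  have a: "E (x + 2 * int N + e) = E x * \<i> * E e"
    by (simp add: E_add E_2N)
  have b: "E (x - 2 * int N - e) = - E x * \<i> * E (-e)"
  proof -
    have "x - 2 * int N - e = x + 2 * int N + (-e) + (- 4 * int N)" by simp
    then have "E (x - 2 * int N - e) = E x * \<i> * E (-e) * E (- 4 * int N)"
      by (simp only: E_add E_2N)
    moreover have "E (- 4 * int N) = -1" using E_neg[of "4 * int N"] E_4N by simp
    ultimately show ?thesis by simp
  qed
  have c: "E (x - 1) = E x * E (-1)" "E (x + 1) = E x * E 1"
    using E_add[of x "-1"] E_add[of x 1] by simp_all
  have k: "complex_of_real r * complex_of_real cs = (1 - complex_of_real r) * complex_of_real sn"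
    using r_key by (metis of_real_1 of_real_diff of_real_mult)
  have g: "R * (X * \<i> * (C + \<i> * S)) + (1 - R) * (X * (C - \<i> * S))
      - (R * (- X * \<i> * (C - \<i> * S)) + (1 - R) * (X * (C + \<i> * S)))
      = 2 * \<i> * X * (R * C - (1 - R) * S)" for R X C S :: complex
    by (simp add: algebra_simps)
  have g2: "R * (X * \<i> * (C - \<i> * S)) + (1 - R) * (X * (C - \<i> * S))
      - (R * (- X * \<i> * (C + \<i> * S)) + (1 - R) * (X * (C + \<i> * S)))
      = 2 * \<i> * X * (R * C - (1 - R) * S)" for R X C S :: complex
    by (simp add: algebra_simps)
  from assms show ?thesis
  proof
    assume "e = 1"
    then show ?thesis unfolding a b c using g[of "of_real r" "E x" cs sn] k
      by (simp add: E_1 E_m1)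
  next
    assume "e = -1"
    then show ?thesis unfolding a b c using g2[of "of_real r" "E x" cs sn] k
      by (simp add: E_1 E_m1)
  qed
qed

end

context NN
begin

lemma cos_le_gen:
  assumes "0 \<le> a" "a \<le> pi" "a \<le> x" "x \<le> 2 * pi - a"
  shows "cos x \<le> cos a"
proof (cases "x \<le> pi")
  case True then show ?thesis using assms by (intro cos_monotone_0_pi_le) auto
next
  case False
  then have "cos (2 * pi - x) \<le> cos a" using assms by (intro cos_monotone_0_pi_le) auto
  then show ?thesis by simp
qed

lemma cos_lt_gen:
  assumes "0 \<le> a" "a \<le> pi" "a < x" "x < 2 * pi - a"
  shows "cos x < cos a"
proof (cases "x \<le> pi")
  case True then show ?thesis using assms by (intro cos_monotone_0_pi) auto
next
  case False
  then have "cos (2 * pi - x) < cos a" using assms by (intro cos_monotone_0_pi) auto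
  then show ?thesis by simp
qed

lemma E_Re_mod: "Re (E (2 * d - 1)) = Re (E (2 * (d mod (4 * int N)) - 1))"
proof -
  have "(2 * d - 1) mod (8 * int N) = (2 * (d mod (4 * int N)) - 1) mod (8 * int N)"
  proof -
    have "d = d mod (4 * int N) + 4 * int N * (d div (4 * int N))" by simp
    then have "2 * d - 1 = (2 * (d mod (4 * int N)) - 1) + 8 * int N * (d div (4 * int N))"
      by linarith
    then show ?thesis by (metis mod_mult_self2 mult.commute)
  qed
  then show ?thesis using E_cong by metis
qed

lemma COS:
  fixes d :: int
  shows "Re (E (2 * d - 1)) \<le> cs"
    and "Re (E (2 * d - 1)) = cs \<longleftrightarrow> d mod (4 * int N) = 0 \<or> d mod (4 * int N) = 1"
proof -
  define e where "e = d mod (4 * int N)"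
  have e0: "0 \<le> e" "e < 4 * int N" unfolding e_def using Npos by auto
  have re: "Re (E (2 * d - 1)) = cos (real_of_int (2 * e - 1) * pi / (4 * real N))"
    using E_Re_mod[of d] E_Re unfolding e_def by simp
  define x where "x = real_of_int (2 * e - 1) * pi / (4 * real N)"
  have cs': "cs = cos (pi / (4 * real N))" by (simp add: cs_def)
  have case01: "Re (E (2 * d - 1)) = cs" if "e = 0 \<or> e = 1"
    using that re by (auto simp: cs_def)
  have casegt: "Re (E (2 * d - 1)) < cs" if "2 \<le> e"
  proof -
    have "pi / (4 * real N) < x"
    proof -
      have "real_of_int (2 * e - 1) \<ge> 3" using that by simp
      then have "1 * pi < real_of_int (2 * e - 1) * pi" by (intro mult_strict_right_mono) auto
      then show ?thesis unfolding x_def using Npos by (intro divide_strict_right_mono) auto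
    qed
    moreover have "x < 2 * pi - pi / (4 * real N)"
    proof -
      have "real_of_int (2 * e - 1) \<le> 8 * real N - 3" using e0 by linarith
      then have "real_of_int (2 * e - 1) * pi \<le> (8 * real N - 3) * pi" by (intro mult_right_mono) auto
      then have "x \<le> (8 * real N - 3) * pi / (4 * real N)" unfolding x_def using Npos
        by (intro divide_right_mono) auto
      also have "\<dots> < 2 * pi - pi / (4 * real N)" using Npos by (simp add: field_simps)
      finally show ?thesis .
    qed
    ultimately have "cos x < cos (pi / (4 * real N))"
      using ang_bounds by (intro cos_lt_gen) auto
    then show ?thesis using re unfolding x_def cs_def by simp
  qed
  have ee: "e = 0 \<or> e = 1 \<or> 2 \<le> e" using e0 by linarith
  show "Re (E (2 * d - 1)) \<le> cs"
    using ee
  proof (elim disjE)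
    assume "2 \<le> e" then show ?thesis using casegt by fastforce
  qed (use case01 in auto)
  show "Re (E (2 * d - 1)) = cs \<longleftrightarrow> d mod (4 * int N) = 0 \<or> d mod (4 * int N) = 1"
    using ee
  proof (elim disjE)
    assume "2 \<le> e" then show ?thesis using casegt e_def by fastforce
  qed (use case01 e_def in auto)
qed

definition lam :: "int \<Rightarrow> complex \<Rightarrow> real" where
  "lam q z = inner (E (2 * q)) z"

lemma lam_Re: "lam q z = Re (z * cnj (E (2 * q)))"
  unfolding lam_def by (simp add: inner_complex_def algebra_simps)

lemma lam_vC: "lam q (vC N k) = Re (E (2 * (int k - q) - 1))"
proof -
  have "vC N k * cnj (E (2 * q)) = E (2 * (int k - q) - 1)"
    unfolding vC_E E_cnj E_add[symmetric] by (simp add: algebra_simps)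
  then show ?thesis by (simp add: lam_Re)
qed

lemma lam_add: "lam q (a + b) = lam q a + lam q b"
  unfolding lam_def by (simp add: inner_add_right)

lemma lam_scale: "lam q (complex_of_real t * a) = t * lam q a"
  unfolding lam_def by (metis inner_scaleR_right scaleR_conv_of_real)

lemma lam_diff: "lam q (a - b) = lam q a - lam q b"
  unfolding lam_def by (simp add: inner_diff_right)

abbreviation V :: "complex set" where "V \<equiv> vC N ` Lam N"

lemma vC_mod: "vC N j = vC N (j mod (4 * N))"
proof -
  have "(2 * int j - 1) mod (8 * int N) = (2 * int (j mod (4 * N)) - 1) mod (8 * int N)"
  proof -
    define a where "a = j mod (4 * N)"
    define b where "b = j div (4 * N)"
    have "j = a + 4 * N * b" unfolding a_def b_def by simp
    then have "int j = int a + 4 * int N * int b" by simp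
    then have "int j = int (j mod (4 * N)) + 4 * int N * int (j div (4 * N))"
      unfolding a_def b_def .
    then have "2 * int j - 1 = (2 * int (j mod (4 * N)) - 1) + 8 * int N * int (j div (4 * N))"
      by linarith
    then show ?thesis by (metis mod_mult_self2 mult.commute)
  qed
  then show ?thesis unfolding vC_E using E_cong by metis
qed

lemma vC_in_V: "vC N j \<in> V"
  using vC_mod[of j] Npos unfolding Lam_def by auto

lemma finite_V: "finite V" unfolding Lam_def by simp

lemma F0_sup: "z \<in> F0 N \<Longrightarrow> lam q z \<le> cs"
proof -
  assume z: "z \<in> F0 N"
  have "V \<subseteq> {x. inner (E (2 * q)) x \<le> cs}"
  proof
    fix x assume "x \<in> V"
    then obtain k where "x = vC N k" by auto
    then show "x \<in> {x. inner (E (2 * q)) x \<le> cs}"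
      using lam_vC[of q k] COS(1)[of "int k - q"] by (simp add: lam_def)
  qed
  then have "convex hull V \<subseteq> {x. inner (E (2 * q)) x \<le> cs}"
    by (intro hull_minimal convex_halfspace_le)
  then show ?thesis using z unfolding F0_def lam_def by auto
qed

lemma seg_lam: "z \<in> seg N q \<Longrightarrow> lam (int q) z = cs"
proof -
  assume z: "z \<in> seg N q"
  then obtain u where u: "0 \<le> u" "u \<le> 1" "z = (1 - u) *\<^sub>R vC N q + u *\<^sub>R vC N (q + 1)"
    unfolding seg_def in_segment by auto
  have a: "lam (int q) (vC N q) = cs" using COS(2)[of 0] by (simp add: lam_vC)
  have b: "lam (int q) (vC N (q + 1)) = cs" using COS(2)[of 1] Npos by (simp add: lam_vC)
  have "lam (int q) z = (1 - u) * lam (int q) (vC N q) + u * lam (int q) (vC N (q + 1))"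
    unfolding u(3) lam_def by (simp add: inner_add_right)
  then show ?thesis using a b by (simp add: algebra_simps)
qed

lemma F0_convex: "convex (F0 N)" unfolding F0_def by simp

lemma V_F0: "vC N j \<in> F0 N"
  unfolding F0_def by (rule hull_inc[OF vC_in_V])

lemma seg_F0: "seg N q \<subseteq> F0 N"
  unfolding seg_def by (intro closed_segment_subset V_F0 F0_convex)

end

context NN
begin

lemma vC_eq_int: "(int k - int q) mod (4 * int N) = 0 \<Longrightarrow> vC N k = vC N q"
proof -
  assume h: "(int k - int q) mod (4 * int N) = 0"
  then obtain t where t: "int k - int q = 4 * int N * t" by (metis dvd_def mod_0_imp_dvd)
  have "2 * int k - 1 = (2 * int q - 1) + 8 * int N * t" using t by linarith
  then have "(2 * int k - 1) mod (8 * int N) = (2 * int q - 1) mod (8 * int N)"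
    by (metis mod_mult_self2 mult.commute)
  then show ?thesis unfolding vC_E by (rule E_cong)
qed

lemma vC_neq_succ: "vC N q \<noteq> vC N (q + 1)"
proof
  assume h: "vC N q = vC N (q + 1)"
  have "lam (int (q + 1)) (vC N (q + 1)) = cs" using COS(2)[of 0] by (simp add: lam_vC)
  moreover have "lam (int (q + 1)) (vC N q) \<noteq> cs"
  proof -
    have "(-1::int) mod (4 * int N) = 4 * int N - 1" using Npos
      by (simp add: zmod_minus1)
    then have "\<not> ((-1::int) mod (4 * int N) = 0 \<or> (-1::int) mod (4 * int N) = 1)" using N2 by simp
    then have "Re (E (2 * (-1) - 1)) \<noteq> cs" using COS(2)[of "-1"] by blast
    moreover have "int q - int (q + 1) = -1" by simp
    ultimately show ?thesis by (simp add: lam_vC)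
  qed
  ultimately show False using h by simp
qed

lemma lam_vC_lt:
  assumes "vC N k \<noteq> vC N q" "vC N k \<noteq> vC N (q + 1)"
  shows "lam (int q) (vC N k) < cs"
proof -
  have "(int k - int q) mod (4 * int N) \<noteq> 0" using assms(1) vC_eq_int by metis
  moreover have "(int k - int q) mod (4 * int N) \<noteq> 1"
  proof
    assume h1: "(int k - int q) mod (4 * int N) = 1"
    have e: "int k - int (q + 1) = (int k - int q) - 1" by simp
    have "(int k - int (q + 1)) mod (4 * int N) = ((int k - int q) mod (4 * int N) - 1) mod (4 * int N)"
      unfolding e by (simp only: mod_diff_left_eq)
    then have "(int k - int (q + 1)) mod (4 * int N) = 0" using h1 by simp
    then show False using assms(2) vC_eq_int by metis
  qed
  ultimately have "Re (E (2 * (int k - int q) - 1)) \<noteq> cs" using COS(2) by blast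
  then show ?thesis using COS(1)[of "int k - int q"] by (simp add: lam_vC)
qed

lemma lam_sum: "lam q (\<Sum>x\<in>S. u x *\<^sub>R x) = (\<Sum>x\<in>S. u x * lam q x)"
  unfolding lam_def by (simp add: inner_sum_right)

lemma LINE:
  assumes z: "z \<in> F0 N" and l: "lam (int q) z = cs"
  shows "z \<in> seg N q"
proof -
  define a where "a = vC N q"
  define b where "b = vC N (q + 1)"
  have ab: "a \<noteq> b" unfolding a_def b_def by (rule vC_neq_succ)
  have aV: "a \<in> V" "b \<in> V" unfolding a_def b_def by (rule vC_in_V)+
  obtain u where u: "\<forall>x\<in>V. 0 \<le> u x" "sum u V = 1" "(\<Sum>x\<in>V. u x *\<^sub>R x) = z"
    using z unfolding F0_def convex_hull_finite[OF finite_V] by blast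
  have "(\<Sum>x\<in>V. u x * (cs - lam (int q) x)) = cs * sum u V - (\<Sum>x\<in>V. u x * lam (int q) x)"
    by (simp add: algebra_simps sum_subtractf sum_distrib_left sum_distrib_right)
  also have "\<dots> = 0" using u l lam_sum[of "int q" u V] by simp
  finally have s0: "(\<Sum>x\<in>V. u x * (cs - lam (int q) x)) = 0" .
  have nn: "\<forall>x\<in>V. 0 \<le> u x * (cs - lam (int q) x)"
  proof
    fix x assume xV: "x \<in> V"
    then obtain k where k: "x = vC N k" by blast
    have "lam (int q) x \<le> cs" unfolding k by (rule F0_sup[OF V_F0])
    moreover have "0 \<le> u x" using u(1) xV by blast
    ultimately show "0 \<le> u x * (cs - lam (int q) x)" by simp
  qed
  have all0: "\<forall>x\<in>V. u x * (cs - lam (int q) x) = 0"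
    using s0 sum_nonneg_eq_0_iff[OF finite_V, of "\<lambda>x. u x * (cs - lam (int q) x)"] nn by blast
  have zero: "u x = 0" if xV: "x \<in> V" and xa: "x \<noteq> a" and xb: "x \<noteq> b" for x
  proof -
    obtain k where k: "x = vC N k" using xV by blast
    have "lam (int q) x < cs" using lam_vC_lt[of k q] xa xb k unfolding a_def b_def by simp
    moreover have "u x * (cs - lam (int q) x) = 0"
      using all0 xV by blast
    ultimately show ?thesis by simp
  qed
  have sub: "{a, b} \<subseteq> V" using aV by auto
  have "sum u V = sum u {a, b}"
    by (rule sum.mono_neutral_right[OF finite_V sub]) (use zero in auto)
  then have s1: "u a + u b = 1" using u(2) ab by simp
  have "(\<Sum>x\<in>V. u x *\<^sub>R x) = (\<Sum>x\<in>{a,b}. u x *\<^sub>R x)"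
    by (rule sum.mono_neutral_right[OF finite_V sub]) (use zero in auto)
  then have "z = u a *\<^sub>R a + u b *\<^sub>R b" using u(3) ab by simp
  moreover have ua: "u a = 1 - u b" using s1 by linarith
  ultimately have zz: "z = (1 - u b) *\<^sub>R a + u b *\<^sub>R b" by simp
  have "0 \<le> u b" using u(1) aV by blast
  moreover have "0 \<le> u a" using u(1) aV by blast
  ultimately have "0 \<le> u b" "u b \<le> 1" using s1 by linarith+
  with zz show ?thesis unfolding seg_def a_def[symmetric] b_def[symmetric] in_segment by blast
qed

end

context NN
begin

lemma linear_rot: "linear (\<lambda>z. c * (z::complex))"
  using bounded_linear.linear[OF bounded_linear_mult_right] .

lemma rot_vC: "E (2 * int a) * vC N k = vC N (k + a)"
  unfolding vC_E E_add[symmetric] by (simp add: algebra_simps)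

lemma rot_seg: "(\<lambda>z. E (2 * int a) * z) ` seg N q = seg N (q + a)"
  unfolding seg_def closed_segment_linear_image[OF linear_rot, symmetric] rot_vC
  by (simp add: algebra_simps)

lemma cnj_vC: "cnj (vC N k) = vC N (4 * N * (k + 1) + 1 - k)"
proof -
  have "cnj (vC N k) = E (- (2 * int k - 1))" unfolding vC_E E_cnj ..
  also have "\<dots> = E (2 * int (4 * N * (k + 1) + 1 - k) - 1)"
  proof (rule E_cong)
    have "1 * k \<le> (4 * N) * (k + 1)" using N2 by (intro mult_mono) auto
    then have kle: "k \<le> 4 * N * (k + 1) + 1" by simp
    have "int (4 * N * (k + 1) + 1 - k) = int (4 * N * (k + 1) + 1) - int k"
      using kle by (rule of_nat_diff)
    then have "int (4 * N * (k + 1) + 1 - k) = 4 * int N * (int k + 1) + 1 - int k"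
      by (simp add: algebra_simps)
    then have "2 * int (4 * N * (k + 1) + 1 - k) - 1 = - (2 * int k - 1) + 8 * int N * (int k + 1)"
      by simp
    then show "(- (2 * int k - 1)) mod (8 * int N) = (2 * int (4 * N * (k + 1) + 1 - k) - 1) mod (8 * int N)"
      by (metis mod_mult_self2 mult.commute)
  qed
  finally show ?thesis unfolding vC_E .
qed

lemma cnj_vC0: "cnj (vC N 0) = vC N 1"
  unfolding vC_E E_cnj by simp

lemma cnj_vC1: "cnj (vC N 1) = vC N 0"
  unfolding vC_E E_cnj by simp

lemma cnj_seg0: "cnj ` seg N 0 = seg N 0"
  unfolding seg_def closed_segment_linear_image[OF linear_cnj, symmetric] cnj_vC0
  using cnj_vC1 by (simp add: closed_segment_commute)

lemma rot_F0: "z \<in> F0 N \<Longrightarrow> E (2 * int a) * z \<in> F0 N"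
proof -
  assume z: "z \<in> F0 N"
  have "(\<lambda>z. E (2 * int a) * z) ` F0 N = convex hull ((\<lambda>z. E (2 * int a) * z) ` V)"
    unfolding F0_def by (rule convex_hull_linear_image[OF linear_rot])
  also have "\<dots> \<subseteq> F0 N"
    unfolding F0_def by (rule hull_mono) (auto simp: rot_vC vC_in_V)
  finally show ?thesis using z by blast
qed

lemma cnj_F0: "z \<in> F0 N \<Longrightarrow> cnj z \<in> F0 N"
proof -
  assume z: "z \<in> F0 N"
  have "cnj ` F0 N = convex hull (cnj ` V)"
    unfolding F0_def by (rule convex_hull_linear_image[OF linear_cnj])
  also have "\<dots> \<subseteq> F0 N"
    unfolding F0_def by (rule hull_mono) (auto simp: cnj_vC vC_in_V)
  finally show ?thesis using z by blast
qed

lemma phi_eq: "phi N j x = complex_of_real r * x + (1 - complex_of_real r) * vC N j"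
  unfolding phi_def by (simp add: algebra_simps)

lemma phi_F0: "x \<in> F0 N \<Longrightarrow> phi N j x \<in> F0 N"
proof -
  assume x: "x \<in> F0 N"
  have "(1 - r) *\<^sub>R vC N j + r *\<^sub>R x \<in> F0 N"
    using F0_convex x V_F0 r_pos r_lt1 unfolding convex_alt by (metis less_eq_real_def)
  then show ?thesis unfolding phi_eq by (simp add: scaleR_conv_of_real algebra_simps)
qed

lemma lam_phi: "lam q (phi N j x) = r * lam q x + (1 - r) * lam q (vC N j)"
proof -
  have "phi N j x = complex_of_real r * x + complex_of_real (1 - r) * vC N j"
    unfolding phi_eq by simp
  then show ?thesis by (simp only: lam_add lam_scale)
qed

lemma Gm3:
  assumes x: "x \<in> F0 N" and p: "phi N j x \<in> seg N q"
  shows "x \<in> seg N q" "(int j - int q) mod (4 * int N) = 0 \<or> (int j - int q) mod (4 * int N) = 1"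
proof -
  have l: "lam (int q) (phi N j x) = cs" using seg_lam p by blast
  have a: "lam (int q) x \<le> cs" using F0_sup x by blast
  have b: "lam (int q) (vC N j) \<le> cs" using F0_sup V_F0 by blast
  have eq: "r * lam (int q) x + (1 - r) * lam (int q) (vC N j) = cs" using l lam_phi by simp
  have "r * lam (int q) x \<le> r * cs" using a r_pos by (intro mult_left_mono) auto
  moreover have "(1 - r) * lam (int q) (vC N j) \<le> (1 - r) * cs" using b r_lt1 by (intro mult_left_mono) auto
  moreover have "r * cs + (1 - r) * cs = cs" by (simp add: algebra_simps)
  ultimately have "r * lam (int q) x = r * cs" "(1 - r) * lam (int q) (vC N j) = (1 - r) * cs"
    using eq by linarith+
  then have c1: "lam (int q) x = cs" and c2: "lam (int q) (vC N j) = cs" using r_pos r_lt1 by auto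
  show "x \<in> seg N q" using LINE x c1 by blast
  show "(int j - int q) mod (4 * int N) = 0 \<or> (int j - int q) mod (4 * int N) = 1"
    using c2 COS(2)[of "int j - int q"] lam_vC[of "int q" j] by simp
qed

end

context NN
begin

lemma F0_norm: "x \<in> F0 N \<Longrightarrow> norm x \<le> 1"
proof -
  assume x: "x \<in> F0 N"
  have "V \<subseteq> cball 0 1" by (auto simp: vC_E)
  then have "convex hull V \<subseteq> cball 0 1" by (intro hull_minimal convex_cball)
  then show ?thesis using x unfolding F0_def by auto
qed

lemma phi_near: "x \<in> F0 N \<Longrightarrow> norm (phi N j x - complex_of_real (1 - r) * vC N j) \<le> r"
proof -
  assume x: "x \<in> F0 N"
  have "phi N j x - complex_of_real (1 - r) * vC N j = complex_of_real r * x"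
    unfolding phi_eq by (simp add: algebra_simps)
  then have "norm (phi N j x - complex_of_real (1 - r) * vC N j) = r * norm x"
    using r_pos by (simp add: norm_mult)
  also have "\<dots> \<le> r * 1" using F0_norm[OF x] r_pos by (intro mult_left_mono) auto
  finally show ?thesis by simp
qed

lemma normsq_Re: "(norm w)^2 = Re (w * cnj w)"
  using cmod_power2[of w] by (simp add: power2_eq_square)

lemma unit_dist: "norm a = 1 \<Longrightarrow> norm b = 1 \<Longrightarrow> (norm (a - b))^2 = 2 - 2 * Re (a * cnj b)"
proof -
  assume a: "norm a = 1" and b: "norm b = 1"
  have "(norm (a - b))^2 = Re ((a - b) * cnj (a - b))" by (rule normsq_Re)
  also have "\<dots> = Re (a * cnj a) + Re (b * cnj b) - Re (a * cnj b) - Re (b * cnj a)"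
    by (simp add: algebra_simps)
  also have "Re (a * cnj a) = 1" using a normsq_Re[of a] by simp
  also have "Re (b * cnj b) = 1" using b normsq_Re[of b] by simp
  also have "Re (b * cnj a) = Re (a * cnj b)" by (simp add: algebra_simps)
  finally show ?thesis by simp
qed

lemma cs2: "cs^2 > 1/2"
proof -
  have "cos (2 * (pi / (4 * real N))) > 0"
    using ang_bounds by (intro cos_gt_zero) auto
  then have "2 * cs^2 - 1 > 0" unfolding cs_def cos_double_cos .
  then show ?thesis by simp
qed

lemma far_bound: "(1 - r)^2 * (2 - 2 * cos (pi / real N)) > 4 * r^2"
proof -
  define t where "t = pi / (4 * real N)"
  have pN: "pi / real N = 2 * (2 * t)" unfolding t_def using Npos by (simp add: field_simps)
  have "cos (pi / real N) = 1 - 2 * (sin (2 * t))^2" unfolding pN cos_double_sin ..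
  also have "sin (2 * t) = 2 * sn * cs" unfolding sin_double t_def sn_def cs_def by simp
  finally have c4: "2 - 2 * cos (pi / real N) = 16 * sn^2 * cs^2" by (simp add: power2_eq_square algebra_simps)
  have r1: "1 - r = cs / (sn + cs)" using r_eq sn_pos cs_pos by (simp add: field_simps)
  have "cs^2 * cs^2 > (1/2) * (1/2)" by (rule mult_strict_mono[OF cs2 cs2]) (use cs_pos in auto)
  then have "4 * cs^2 * cs^2 > 1" by linarith
  then have "4 * sn^2 * (4 * cs^2 * cs^2) > 4 * sn^2 * 1" using sn_pos by (intro mult_strict_left_mono) auto
  then have "cs^2 * (16 * sn^2 * cs^2) > 4 * sn^2" by (simp add: algebra_simps)
  then have "(cs^2 * (16 * sn^2 * cs^2)) / (sn + cs)^2 > 4 * sn^2 / (sn + cs)^2"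
    using sn_pos cs_pos by (intro divide_strict_right_mono) auto
  moreover have "(1 - r)^2 * (2 - 2 * cos (pi / real N)) = (cs^2 * (16 * sn^2 * cs^2)) / (sn + cs)^2"
    unfolding c4 r1 by (simp add: power_divide)
  moreover have "4 * r^2 = 4 * sn^2 / (sn + cs)^2" unfolding r_eq by (simp add: power_divide)
  ultimately show ?thesis by simp
qed

lemma copies_disjoint:
  assumes j: "j < 4 * N" and j': "j' < 4 * N"
    and d: "2 \<le> (int j - int j') mod (4 * int N)" "(int j - int j') mod (4 * int N) \<le> 4 * int N - 2"
    and x: "x \<in> F0 N" and y: "y \<in> F0 N"
  shows "phi N j x \<noteq> phi N j' y"
proof
  assume eq: "phi N j x = phi N j' y"
  define e where "e = (int j - int j') mod (4 * int N)"
  have "norm (complex_of_real (1 - r) * vC N j - complex_of_real (1 - r) * vC N j')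
     \<le> norm (phi N j x - complex_of_real (1 - r) * vC N j) + norm (phi N j' y - complex_of_real (1 - r) * vC N j')"
    using eq by (metis norm_diff_triangle_le order_refl norm_minus_commute)
  also have "\<dots> \<le> r + r" using phi_near x y by (intro add_mono) auto
  moreover have "cmod (1 - complex_of_real r) = 1 - r"
  proof -
    have "1 - complex_of_real r = complex_of_real (1 - r)" by simp
    then show ?thesis using r_lt1 by (simp only: norm_of_real)
  qed
  ultimately have n1: "(1 - r) * norm (vC N j - vC N j') \<le> 2 * r"
    by (simp add: norm_mult right_diff_distrib[symmetric])
  have ne: "Re (vC N j * cnj (vC N j')) = Re (E (2 * e))"
  proof -
    have "vC N j * cnj (vC N j') = E (2 * (int j - int j'))"
      unfolding vC_E E_cnj E_add[symmetric] by (simp add: algebra_simps)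
    also have "\<dots> = E (2 * e)"
    proof (rule E_cong)
      have "int j - int j' = e + 4 * int N * ((int j - int j') div (4 * int N))" unfolding e_def by simp
      then have "2 * (int j - int j') = 2 * e + 8 * int N * ((int j - int j') div (4 * int N))" by simp
      then show "2 * (int j - int j') mod (8 * int N) = 2 * e mod (8 * int N)"
        by (metis mod_mult_self2 mult.commute)
    qed
    finally show ?thesis by simp
  qed
  have "Re (E (2 * e)) = cos (real_of_int (2 * e) * pi / (4 * real N))" by (rule E_Re)
  also have "\<dots> \<le> cos (pi / real N)"
  proof (rule cos_le_gen)
    show "0 \<le> pi / real N" using Npos by simp
    show "pi / real N \<le> pi" using Npos N2 by (simp add: field_simps)
    have e2: "2 \<le> e" "e \<le> 4 * int N - 2" using d unfolding e_def by auto
    then have "real_of_int (2 * e) \<ge> 4" by simp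
    then have "4 * pi \<le> real_of_int (2 * e) * pi" by (intro mult_right_mono) auto
    then show "pi / real N \<le> real_of_int (2 * e) * pi / (4 * real N)"
      using Npos by (simp add: field_simps)
    have "real_of_int (2 * e) \<le> 8 * real N - 4" using e2 by linarith
    then have "real_of_int (2 * e) * pi \<le> (8 * real N - 4) * pi" by (intro mult_right_mono) auto
    then show "real_of_int (2 * e) * pi / (4 * real N) \<le> 2 * pi - pi / real N"
      using Npos by (simp add: field_simps)
  qed
  finally have "(norm (vC N j - vC N j'))^2 \<ge> 2 - 2 * cos (pi / real N)"
    using unit_dist[of "vC N j" "vC N j'"] ne by (simp add: vC_E)
  then have "(1 - r)^2 * (norm (vC N j - vC N j'))^2 \<ge> (1 - r)^2 * (2 - 2 * cos (pi / real N))"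
    by (intro mult_left_mono) auto
  moreover have "((1 - r) * norm (vC N j - vC N j'))^2 \<le> (2 * r)^2"
    using n1 r_lt1 by (intro power_mono) auto
  ultimately have "(1 - r)^2 * (2 - 2 * cos (pi / real N)) \<le> 4 * r^2"
    by (simp add: power_mult_distrib)
  then show False using far_bound by simp
qed

end

context NN
begin

lemma E_m2N: "E (- 2 * int N) = - \<i>"
  using E_neg[of "2 * int N"] E_2N by simp

lemma lam_opp: "lam (q + 2 * int N) z = - lam q z"
proof -
  have "E (2 * (q + 2 * int N)) = - E (2 * q)"
    using E_add[of "2 * q" "4 * int N"] E_4N by (simp add: algebra_simps)
  then show ?thesis unfolding lam_def by simp
qed

lemma contact:
  assumes x: "x \<in> F0 N" and y: "y \<in> F0 N" and eq: "phi N j x = phi N (j + 1) y"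
  shows "x \<in> seg N (j + N)"
proof -
  define \<mu> where "\<mu> = lam (int (j + N))"
  have m1: "\<mu> (vC N j) = - sn"
  proof -
    have "\<mu> (vC N j) = Re (E (- 2 * int N + (- 1)))" unfolding \<mu>_def lam_vC
      by (rule arg_cong[where f="\<lambda>k. Re (E k)"]) simp
    also have "\<dots> = - sn" unfolding E_add E_m2N E_m1 by simp
    finally show ?thesis .
  qed
  have m2: "\<mu> (vC N (j + 1)) = sn"
  proof -
    have "\<mu> (vC N (j + 1)) = Re (E (- 2 * int N + 1))" unfolding \<mu>_def lam_vC
      by (rule arg_cong[where f="\<lambda>k. Re (E k)"]) simp
    also have "\<dots> = sn" unfolding E_add E_m2N E_1 by simp
    finally show ?thesis .
  qed
  have ux: "\<mu> x \<le> cs" unfolding \<mu>_def using F0_sup x by blast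
  have ly: "- \<mu> y \<le> cs"
  proof -
    have "lam (int (j + N) + 2 * int N) y \<le> cs" by (rule F0_sup[OF y])
    then show ?thesis unfolding \<mu>_def lam_opp .
  qed
  have "\<mu> (phi N j x) = r * \<mu> x - (1 - r) * sn" unfolding \<mu>_def lam_phi using m1 \<mu>_def by simp
  moreover have "\<mu> (phi N (j + 1) y) = r * \<mu> y + (1 - r) * sn" unfolding \<mu>_def lam_phi using m2 \<mu>_def by simp
  ultimately have e: "r * \<mu> x - (1 - r) * sn = r * \<mu> y + (1 - r) * sn" using eq by simp
  have "r * \<mu> x \<le> r * cs" using ux r_pos by (intro mult_left_mono) auto
  moreover have "- (r * \<mu> y) \<le> r * cs" using ly r_pos mult_left_mono[of "- \<mu> y" cs r] by simp
  ultimately have "r * \<mu> x = r * cs" using e r_key by linarith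
  then have "\<mu> x = cs" using r_pos by simp
  then show ?thesis using LINE x unfolding \<mu>_def by blast
qed

end

definition sim :: "(complex \<Rightarrow> complex) \<Rightarrow> bool" where
  "sim g \<longleftrightarrow> (\<exists>a b f. a \<noteq> 0 \<and> (\<forall>z. g z = a * (if f then cnj z else z) + b))"

lemma sim_affine:
  assumes "sim g"
  shows "g ((1 - u) *\<^sub>R x + u *\<^sub>R y) = (1 - u) *\<^sub>R g x + u *\<^sub>R g y"
proof -
  obtain a b f where g: "\<forall>z. g z = a * (if f then cnj z else z) + b" using assms unfolding sim_def by blast
  have ge: "\<And>z. g z = a * (if f then cnj z else z) + b" using g by blast
  show ?thesis by (cases f) (simp_all add: ge scaleR_conv_of_real algebra_simps)
qed

lemma sim_inj: "sim g \<Longrightarrow> inj g"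
proof (rule injI)
  fix x y assume "sim g" "g x = g y"
  then obtain a b f where a: "a \<noteq> 0" and g: "\<forall>z. g z = a * (if f then cnj z else z) + b"
    unfolding sim_def by blast
  with \<open>g x = g y\<close> show "x = y" by (cases f) auto
qed

lemma sim_seg: "sim g \<Longrightarrow> g ` closed_segment x y = closed_segment (g x) (g y)"
proof -
  assume s: "sim g"
  show ?thesis
  proof
    show "g ` closed_segment x y \<subseteq> closed_segment (g x) (g y)"
    proof
      fix w assume "w \<in> g ` closed_segment x y"
      then obtain v where v: "v \<in> closed_segment x y" "w = g v" by blast
      then obtain u where u: "0 \<le> u" "u \<le> 1" "v = (1 - u) *\<^sub>R x + u *\<^sub>R y" unfolding in_segment by blast
      then have "w = (1 - u) *\<^sub>R g x + u *\<^sub>R g y" using sim_affine[OF s] v by simp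
      then show "w \<in> closed_segment (g x) (g y)" using u unfolding in_segment by blast
    qed
    show "closed_segment (g x) (g y) \<subseteq> g ` closed_segment x y"
    proof
      fix w assume "w \<in> closed_segment (g x) (g y)"
      then obtain u where u: "0 \<le> u" "u \<le> 1" "w = (1 - u) *\<^sub>R g x + u *\<^sub>R g y" unfolding in_segment by blast
      then have "w = g ((1 - u) *\<^sub>R x + u *\<^sub>R y)" using sim_affine[OF s] by simp
      moreover have "(1 - u) *\<^sub>R x + u *\<^sub>R y \<in> closed_segment x y" using u unfolding in_segment by blast
      ultimately show "w \<in> g ` closed_segment x y" by blast
    qed
  qed
qed

lemma sim_mid: "sim g \<Longrightarrow> g ((x + y) / 2) = (g x + g y) / 2"
proof -
  assume "sim g"
  then obtain a b f where g: "\<forall>z. g z = a * (if f then cnj z else z) + b" unfolding sim_def by blast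
  have ge: "\<And>z. g z = a * (if f then cnj z else z) + b" using g by blast
  show ?thesis by (cases f) (simp_all add: ge field_simps)
qed

lemma sim_comp: "sim g \<Longrightarrow> sim h \<Longrightarrow> sim (g \<circ> h)"
proof -
  assume "sim g" "sim h"
  then obtain a b f a' b' f' where a: "a \<noteq> 0" "\<forall>z. g z = a * (if f then cnj z else z) + b"
    and a': "a' \<noteq> 0" "\<forall>z. h z = a' * (if f' then cnj z else z) + b'"
    unfolding sim_def by blast
  show ?thesis unfolding sim_def
  proof (intro exI conjI allI)
    show "(if f then cnj a' else a') * a \<noteq> 0" using a a' by simp
    fix z
    show "(g \<circ> h) z = ((if f then cnj a' else a') * a) * (if f \<noteq> f' then cnj z else z) + (a * (if f then cnj b' else b') + b)"
      using a a' by (cases f; cases f') (simp_all add: algebra_simps)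
  qed
qed

lemma sim_id: "sim id"
  unfolding sim_def by (rule exI[of _ 1], rule exI[of _ 0], rule exI[of _ False]) simp

context NN
begin

lemma E_eqI: "a = b + 8 * int N * t \<Longrightarrow> E a = E b"
  by (simp add: E_add E_mult8N)

definition hh :: "(nat \<Rightarrow> bool) \<Rightarrow> nat \<Rightarrow> complex \<Rightarrow> complex" where
  "hh ty j x = (if ty j then phi N j (E (2 * int j) * x) else phi N j (E (2 * int j - 2) * cnj x))"

lemma rot_F0_int: "z \<in> F0 N \<Longrightarrow> E (2 * a) * z \<in> F0 N"
proof -
  assume z: "z \<in> F0 N"
  have "E (2 * a) = E (2 * int (nat (a mod (4 * int N))))"
  proof (rule E_eqI)
    have "a = a mod (4 * int N) + 4 * int N * (a div (4 * int N))" by simp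
    moreover have "int (nat (a mod (4 * int N))) = a mod (4 * int N)" using Npos by simp
    ultimately show "2 * a = 2 * int (nat (a mod (4 * int N))) + 8 * int N * (a div (4 * int N))"
      by linarith
  qed
  then show ?thesis using rot_F0[OF z, of "nat (a mod (4 * int N))"] by (simp only:)
qed

lemma phi_sim: "sim (phi N j)"
  unfolding sim_def phi_eq using r_pos
  by (intro exI[of _ "complex_of_real r"] exI[of _ "(1 - complex_of_real r) * vC N j"] exI[of _ False]) simp

lemma hh_sim: "sim (hh ty j)"
proof -
  have r0: "complex_of_real r \<noteq> 0" using r_pos by simp
  show ?thesis
  proof (cases "ty j")
    case True
    then show ?thesis unfolding sim_def hh_def phi_eq using r0
      by (intro exI[of _ "complex_of_real r * E (2 * int j)"] exI[of _ "(1 - complex_of_real r) * vC N j"] exI[of _ False]) simp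
  next
    case False
    then show ?thesis unfolding sim_def hh_def phi_eq using r0
      by (intro exI[of _ "complex_of_real r * E (2 * int j - 2)"] exI[of _ "(1 - complex_of_real r) * vC N j"] exI[of _ True]) simp
  qed
qed

lemma hh_F0: "x \<in> F0 N \<Longrightarrow> hh ty j x \<in> F0 N"
  unfolding hh_def
  using rot_F0[of x j] rot_F0_int[of "cnj x" "int j - 1"] cnj_F0[of x] phi_F0
  by (auto simp: algebra_simps)

lemma hh_phi: "\<exists>y\<in>F0 N. hh ty j x = phi N j y" if "x \<in> F0 N"
  unfolding hh_def
  using that rot_F0[of x j] rot_F0_int[of "cnj x" "int j - 1"] cnj_F0[of x]
  by (auto simp: algebra_simps)

lemma hh_good0:
  assumes "ty a"
  shows "hh ty a x = E (2 * int a) * phi N 0 x"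
proof -
  have "vC N a = E (2 * int a) * vC N 0" using rot_vC[of a 0] by simp
  then show ?thesis using assms unfolding hh_def phi_eq by (simp add: algebra_simps)
qed

lemma hh_good1:
  assumes "\<not> ty (a + 1)"
  shows "hh ty (a + 1) x = E (2 * int a) * phi N 1 (cnj x)"
proof -
  have "vC N (a + 1) = E (2 * int a) * vC N 1" using rot_vC[of a 1] by (simp add: add.commute)
  moreover have "E (2 * int (a + 1) - 2) = E (2 * int a)" by simp
  ultimately show ?thesis using assms unfolding hh_def phi_eq by (simp add: algebra_simps)
qed

lemma psi_hh: "psi N j = hh (\<lambda>j. even j) j"
proof
  fix z
  show "psi N j z = hh (\<lambda>j. even j) j z"
  proof (cases "even j")
    case True then show ?thesis unfolding psi_def hh_def theta_pow by simp
  next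
    case False
    then have "j \<ge> 1" by (cases j) auto
    then have "2 * int (j - 1) = 2 * int j - 2" by simp
    then show ?thesis using False unfolding psi_def hh_def theta_pow by simp
  qed
qed

definition tyT :: "nat \<Rightarrow> bool" where
  "tyT j = (if even N then (if j = 3 * N - 1 then True else if j = 3 * N then False else even j)
            else (if j = N then True else if j = N + 1 then False else even j))"

lemma psit_hh: "psit N j = hh tyT j"
proof
  fix z
  have n1: "2 * int (3 * N - 1) = 2 * int (3 * N) - 2" using N2 by simp
  have n2: "2 * int N = 2 * int (N + 1) - 2" by simp
  have ne1: "3 * N - 1 \<noteq> 3 * N" using N2 by simp
  show "psit N j z = hh tyT j z"
  proof (cases "even N")
    case True
    show ?thesis
    proof (cases "j = 3 * N - 1")
      case True2: True
      then show ?thesis using True unfolding psit_def tyT_def hh_def theta_pow by simp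
    next
      case F2: False
      show ?thesis
      proof (cases "j = 3 * N")
        case True3: True
        then show ?thesis using True F2 ne1 n1 unfolding psit_def tyT_def hh_def theta_pow by simp
      next
        case F3: False
        then have "psit N j z = psi N j z" "tyT j = even j" using True F2 unfolding psit_def tyT_def by auto
        then show ?thesis using psi_hh[of j] unfolding hh_def by (auto simp: fun_eq_iff)
      qed
    qed
  next
    case False
    show ?thesis
    proof (cases "j = N")
      case True2: True
      then show ?thesis using False unfolding psit_def tyT_def hh_def theta_pow by simp
    next
      case F2: False
      show ?thesis
      proof (cases "j = N + 1")
        case True3: True
        then show ?thesis using False F2 n2 unfolding psit_def tyT_def hh_def theta_pow by simp
      next
        case F3: False
        then have "psit N j z = psi N j z" "tyT j = even j" using False F2 unfolding psit_def tyT_def by auto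
        then show ?thesis using psi_hh[of j] unfolding hh_def by (auto simp: fun_eq_iff)
      qed
    qed
  qed
qed

end

context NN
begin

lemma vC_eqI: "2 * int a - 1 = 2 * int b - 1 + 8 * int N * t \<Longrightarrow> vC N a = vC N b"
  unfolding vC_E by (rule E_eqI)

lemma vC_4N: "vC N (q + 4 * N) = vC N q"
  by (rule vC_eqI[where t=1]) simp

lemma seg_4N: "seg N (q + 4 * N) = seg N q"
  unfolding seg_def using vC_4N[of q] vC_4N[of "q + 1"] by (simp add: algebra_simps)

lemma phi_4N: "phi N (j + 4 * N) = phi N j"
  unfolding phi_def[abs_def] using vC_4N by simp

lemma rotc_sim: "sim (\<lambda>x. E k * cnj x)"
  unfolding sim_def by (intro exI[of _ "E k"] exI[of _ 0] exI[of _ True]) simp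

lemma rot_sim: "sim (\<lambda>x. E k * x)"
  unfolding sim_def by (intro exI[of _ "E k"] exI[of _ 0] exI[of _ False]) simp

lemma hh_img: "hh ty j ` S = phi N j ` ((if ty j then (\<lambda>x. E (2 * int j) * x) else (\<lambda>x. E (2 * int j - 2) * cnj x)) ` S)"
  unfolding hh_def by (cases "ty j") (auto simp: image_image)

lemma Cplus: "\<exists>\<alpha>\<in>{N, 3 * N - 1}. hh ty j ` seg N \<alpha> = phi N j ` seg N (j + N)"
proof (cases "ty j")
  case True
  then have "hh ty j ` seg N N = phi N j ` seg N (j + N)"
    unfolding hh_img using rot_seg[of j N] by (simp add: add.commute)
  then show ?thesis by blast
next
  case False
  have a: "E (2 * int j - 2) * cnj (vC N (3 * N - 1)) = vC N (j + N + 1)"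
    unfolding vC_E E_cnj E_add[symmetric] using N2 by (intro E_eqI[where t="-1"]) (simp add: of_nat_diff)
  have b: "E (2 * int j - 2) * cnj (vC N (3 * N - 1 + 1)) = vC N (j + N)"
    unfolding vC_E E_cnj E_add[symmetric] using N2 by (intro E_eqI[where t="-1"]) (simp add: of_nat_diff)
  have "(\<lambda>x. E (2 * int j - 2) * cnj x) ` seg N (3 * N - 1) = seg N (j + N)"
    unfolding seg_def sim_seg[OF rotc_sim] a b by (simp add: closed_segment_commute)
  then have "hh ty j ` seg N (3 * N - 1) = phi N j ` seg N (j + N)"
    unfolding hh_img using False by simp
  then show ?thesis by blast
qed

lemma Cminus: "\<exists>\<beta>\<in>{N, 3 * N - 1}. hh ty j ` seg N \<beta> = phi N j ` seg N (j + 3 * N - 1)"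
proof (cases "ty j")
  case True
  then have "hh ty j ` seg N (3 * N - 1) = phi N j ` seg N (j + 3 * N - 1)"
    unfolding hh_img using rot_seg[of j "3 * N - 1"] N2 by (simp add: add.commute)
  then show ?thesis by blast
next
  case False
  have a: "E (2 * int j - 2) * cnj (vC N N) = vC N (j + 3 * N - 1 + 1)"
    unfolding vC_E E_cnj E_add[symmetric] using N2 by (intro E_eqI[where t="-1"]) (simp add: of_nat_diff)
  have b: "E (2 * int j - 2) * cnj (vC N (N + 1)) = vC N (j + 3 * N - 1)"
    unfolding vC_E E_cnj E_add[symmetric] using N2 by (intro E_eqI[where t="-1"]) (simp add: of_nat_diff)
  have "(\<lambda>x. E (2 * int j - 2) * cnj x) ` seg N N = seg N (j + 3 * N - 1)"
    unfolding seg_def sim_seg[OF rotc_sim] a b by (simp add: closed_segment_commute)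
  then have "hh ty j ` seg N N = phi N j ` seg N (j + 3 * N - 1)"
    unfolding hh_img using False by simp
  then show ?thesis by blast
qed

lemma Cmatch: "phi N j ` seg N (j + N) = phi N (j + 1) ` seg N (j + 1 + 3 * N - 1)"
proof -
  have k1: "phi N j (vC N (j + N)) = phi N (j + 1) (vC N (j + 1 + 3 * N - 1 + 1))"
  proof -
    have "phi N j (vC N (j + N)) = of_real r * E (2 * int j + 2 * int N + (-1)) + (1 - of_real r) * E (2 * int j - 1)"
      unfolding phi_eq vC_E by (simp add: algebra_simps)
    also have "\<dots> = of_real r * E (2 * int j - 2 * int N - (-1)) + (1 - of_real r) * E (2 * int j + 1)"
      by (rule KEY) simp
    also have "\<dots> = phi N (j + 1) (vC N (j + 1 + 3 * N - 1 + 1))"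
    proof -
      have "E (2 * int j - 2 * int N - (-1)) = E (2 * int (j + 1 + 3 * N - 1 + 1) - 1)"
        using N2 by (intro E_eqI[where t="-1"]) (simp add: of_nat_diff)
      then show ?thesis unfolding phi_eq vC_E by (simp add: algebra_simps)
    qed
    finally show ?thesis .
  qed
  have k2: "phi N j (vC N (j + N + 1)) = phi N (j + 1) (vC N (j + 1 + 3 * N - 1))"
  proof -
    have "phi N j (vC N (j + N + 1)) = of_real r * E (2 * int j + 2 * int N + 1) + (1 - of_real r) * E (2 * int j - 1)"
      unfolding phi_eq vC_E by (simp add: algebra_simps)
    also have "\<dots> = of_real r * E (2 * int j - 2 * int N - 1) + (1 - of_real r) * E (2 * int j + 1)"
      by (rule KEY) simp
    also have "\<dots> = phi N (j + 1) (vC N (j + 1 + 3 * N - 1))"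
    proof -
      have "E (2 * int j - 2 * int N - 1) = E (2 * int (j + 1 + 3 * N - 1) - 1)"
        using N2 by (intro E_eqI[where t="-1"]) (simp add: of_nat_diff)
      then show ?thesis unfolding phi_eq vC_E by (simp add: algebra_simps)
    qed
    finally show ?thesis .
  qed
  show ?thesis unfolding seg_def sim_seg[OF phi_sim] k1 k2
    by (simp add: closed_segment_commute)
qed

end

context NN
begin

definition Good :: "(nat \<Rightarrow> bool) \<Rightarrow> nat \<Rightarrow> bool" where
  "Good ty a \<longleftrightarrow> a + 1 < 4 * N \<and> ty a \<and> \<not> ty (a + 1)"

lemma rot_seg0: "(\<lambda>z. E (2 * int a) * z) ` seg N 0 = seg N a"
  using rot_seg[of a 0] by simp

lemma loc:
  assumes g: "Good ty a" and j: "j < 4 * N" and x: "x \<in> F0 N" and h: "hh ty j x \<in> seg N a"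
  shows "(j = a \<or> j = a + 1) \<and> x \<in> seg N 0"
proof -
  obtain y where y: "y \<in> F0 N" "hh ty j x = phi N j y" using hh_phi[OF x] by blast
  have ys: "y \<in> seg N a" and m: "(int j - int a) mod (4 * int N) = 0 \<or> (int j - int a) mod (4 * int N) = 1"
    using Gm3[OF y(1)] h y(2) by auto
  have a4: "a + 1 < 4 * N" using g unfolding Good_def by simp
  have ja: "j = a \<or> j = a + 1"
  proof (cases "j \<ge> a")
    case True
    then have "(int j - int a) mod (4 * int N) = int j - int a" using j by (intro mod_pos_pos_trivial) auto
    then show ?thesis using m True by auto
  next
    case False
    then have "(int j - int a) mod (4 * int N) = int j - int a + 4 * int N"
    proof -
      have "(int j - int a + 4 * int N) mod (4 * int N) = int j - int a + 4 * int N"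
        using False a4 by (intro mod_pos_pos_trivial) auto
      then show ?thesis by simp
    qed
    then show ?thesis using m False a4 by auto
  qed
  have "x \<in> seg N 0"
    using ja
  proof
    assume ja: "j = a"
    then have "ty j" using g unfolding Good_def by simp
    then have "E (2 * int a) * x \<in> seg N a" using ys y(2) ja unfolding hh_def
      by (simp add: inj_eq[OF sim_inj[OF phi_sim]])
    then obtain w where w: "w \<in> seg N 0" "E (2 * int a) * x = E (2 * int a) * w"
      using rot_seg0[of a] by (metis (no_types, lifting) image_iff)
    then show ?thesis by simp
  next
    assume ja: "j = a + 1"
    then have "\<not> ty j" using g unfolding Good_def by simp
    moreover have "E (2 * int (a + 1) - 2) = E (2 * int a)" by simp
    ultimately have "E (2 * int a) * cnj x \<in> seg N a" using ys y(2) ja unfolding hh_def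
      by (simp add: inj_eq[OF sim_inj[OF phi_sim]])
    then obtain w where w: "w \<in> seg N 0" "E (2 * int a) * cnj x = E (2 * int a) * w"
      using rot_seg0[of a] by (metis (no_types, lifting) image_iff)
    then have "cnj x \<in> seg N 0" by simp
    then have "cnj (cnj x) \<in> cnj ` seg N 0" by blast
    then show ?thesis using cnj_seg0 by simp
  qed
  with ja show ?thesis by blast
qed

lemma idx:
  assumes j: "j < 4 * N" and j': "j' < 4 * N"
  shows "j = j' \<or> j' = (j + 1) mod (4 * N) \<or> j = (j' + 1) mod (4 * N)
    \<or> (2 \<le> (int j - int j') mod (4 * int N) \<and> (int j - int j') mod (4 * int N) \<le> 4 * int N - 2)"
proof (cases "j' \<le> j")
  case True
  then have e: "(int j - int j') mod (4 * int N) = int j - int j'" using j by (intro mod_pos_pos_trivial) auto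
  show ?thesis
  proof (cases "j = j' + 1")
    case True
    then have "(j' + 1) mod (4 * N) = j" using j by simp
    then show ?thesis by blast
  next
    case F1: False
    show ?thesis
    proof (cases "j = 4 * N - 1 \<and> j' = 0")
      case True
      then have "(j + 1) mod (4 * N) = j'" using Npos by simp
      then show ?thesis by blast
    next
      case False
      then have "int j - int j' \<noteq> 4 * int N - 1" using j j' True by linarith
      then show ?thesis unfolding e using True F1 j by (cases "j = j'") linarith+
    qed
  qed
next
  case False
  then have e: "(int j - int j') mod (4 * int N) = int j - int j' + 4 * int N"
  proof -
    have "(int j - int j' + 4 * int N) mod (4 * int N) = int j - int j' + 4 * int N"
      using False j' by (intro mod_pos_pos_trivial) auto
    then show ?thesis by simp
  qed
  show ?thesis
  proof (cases "j' = j + 1")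
    case True
    then have "(j + 1) mod (4 * N) = j'" using j' by simp
    then show ?thesis by blast
  next
    case F1: False
    show ?thesis
    proof (cases "j' = 4 * N - 1 \<and> j = 0")
      case True
      then have "(j' + 1) mod (4 * N) = j" using Npos by simp
      then show ?thesis by blast
    next
      case F2: False
      then have "int j - int j' + 4 * int N \<noteq> 1" using j j' False by linarith
      moreover have "int j - int j' + 4 * int N \<noteq> 4 * int N - 1" using F1 False by linarith
      ultimately show ?thesis unfolding e using False j j' by linarith
    qed
  qed
qed

lemma NONADJ:
  assumes j: "j < 4 * N" and j': "j' < 4 * N"
    and d: "2 \<le> (int j - int j') mod (4 * int N)" "(int j - int j') mod (4 * int N) \<le> 4 * int N - 2"
    and x: "x \<in> F0 N" and y: "y \<in> F0 N"
  shows "hh ty j x \<noteq> hh ty' j' y"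
proof -
  obtain x1 where x1: "x1 \<in> F0 N" "hh ty j x = phi N j x1" using hh_phi[OF x] by blast
  obtain y1 where y1: "y1 \<in> F0 N" "hh ty' j' y = phi N j' y1" using hh_phi[OF y] by blast
  show ?thesis using copies_disjoint[OF j j' d x1(1) y1(1)] x1 y1 by simp
qed

lemma phi_succ_mod: "phi N ((j + 1) mod (4 * N)) = phi N (j + 1)" if "j < 4 * N"
proof (cases "j + 1 < 4 * N")
  case True then show ?thesis by simp
next
  case False
  then have "j + 1 = 0 + 4 * N" using that by simp
  then show ?thesis using phi_4N[of 0] by (simp add: mod_self)
qed

lemma seg_succ_mod: "seg N ((j + 1) mod (4 * N) + 3 * N - 1) = seg N (j + 1 + 3 * N - 1)" if "j < 4 * N"
proof (cases "j + 1 < 4 * N")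
  case True then show ?thesis by simp
next
  case False
  then have "j + 1 = 0 + 4 * N" using that by simp
  then have "j + 1 + 3 * N - 1 = (0 + 3 * N - 1) + 4 * N" using N2 by simp
  then show ?thesis using seg_4N[of "0 + 3 * N - 1"] \<open>j + 1 = 0 + 4 * N\<close> by simp
qed

lemma ADJ:
  assumes j: "j < 4 * N" and j': "j' = (j + 1) mod (4 * N)"
    and x: "x \<in> F0 N" and y: "y \<in> F0 N" and eq: "hh ty j x = hh ty j' y"
  shows "\<exists>\<alpha>\<in>{N, 3 * N - 1}. \<exists>\<beta>\<in>{N, 3 * N - 1}. x \<in> seg N \<alpha> \<and> y \<in> seg N \<beta>
           \<and> hh ty j ` seg N \<alpha> = hh ty j' ` seg N \<beta>"
proof -
  obtain x1 where x1: "x1 \<in> F0 N" "hh ty j x = phi N j x1" using hh_phi[OF x] by blast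
  obtain y1 where y1: "y1 \<in> F0 N" "hh ty j' y = phi N j' y1" using hh_phi[OF y] by blast
  have pj: "phi N j' = phi N (j + 1)" unfolding j' using phi_succ_mod[OF j] .
  have "x1 \<in> seg N (j + N)" using contact[OF x1(1) y1(1)] x1 y1 eq pj by simp
  obtain \<alpha> where a: "\<alpha> \<in> {N, 3 * N - 1}" "hh ty j ` seg N \<alpha> = phi N j ` seg N (j + N)"
    using Cplus by blast
  obtain \<beta> where b: "\<beta> \<in> {N, 3 * N - 1}" "hh ty j' ` seg N \<beta> = phi N j' ` seg N (j' + 3 * N - 1)"
    using Cminus by blast
  have m: "phi N j ` seg N (j + N) = phi N j' ` seg N (j' + 3 * N - 1)"
  proof -
    have "seg N (j' + 3 * N - 1) = seg N (j + 1 + 3 * N - 1)" unfolding j' by (rule seg_succ_mod[OF j])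
    then show ?thesis using Cmatch[of j] pj by simp
  qed
  have same: "hh ty j ` seg N \<alpha> = hh ty j' ` seg N \<beta>" using a b m by simp
  have z: "hh ty j x \<in> hh ty j ` seg N \<alpha>" using a(2) x1 \<open>x1 \<in> seg N (j + N)\<close> by auto
  then have xa: "x \<in> seg N \<alpha>" using inj_image_mem_iff[OF sim_inj[OF hh_sim]] by blast
  have "hh ty j' y \<in> hh ty j' ` seg N \<beta>" using z same eq by simp
  then have yb: "y \<in> seg N \<beta>" using inj_image_mem_iff[OF sim_inj[OF hh_sim]] by blast
  show ?thesis using a(1) b(1) xa yb same by blast
qed

lemma aff_agree:
  assumes "sim f" "sim g" "f a = g a" "f b = g b" "w \<in> closed_segment a b"
  shows "f w = g w"
proof -
  obtain u where "w = (1 - u) *\<^sub>R a + u *\<^sub>R b" using assms(5) unfolding in_segment by blast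
  then show ?thesis using sim_affine[OF assms(1)] sim_affine[OF assms(2)] assms(3,4) by simp
qed

lemma aff_agree_swap:
  assumes "sim f" "sim g" "f (vC N 0) = g (vC N 1)" "f (vC N 1) = g (vC N 0)" "w \<in> seg N 0"
  shows "f w = g (cnj w)"
proof -
  obtain u where u: "w = (1 - u) *\<^sub>R vC N 0 + u *\<^sub>R vC N 1" using assms(5) unfolding in_segment seg_def by auto
  have c0: "cnj (vC N 0) = vC N 1" "cnj (vC N 1) = vC N 0" using cnj_vC0 cnj_vC1 by auto
  have "cnj w = (1 - u) *\<^sub>R cnj (vC N 0) + u *\<^sub>R cnj (vC N 1)"
    unfolding u by (simp add: scaleR_conv_of_real)
  also have "\<dots> = (1 - u) *\<^sub>R vC N 1 + u *\<^sub>R vC N 0" unfolding c0 ..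
  also have "\<dots> = (1 - (1 - u)) *\<^sub>R vC N 0 + (1 - u) *\<^sub>R vC N 1" by simp
  finally have "cnj w = (1 - (1 - u)) *\<^sub>R vC N 0 + (1 - u) *\<^sub>R vC N 1" .
  then have "g (cnj w) = (1 - (1 - u)) *\<^sub>R g (vC N 0) + (1 - u) *\<^sub>R g (vC N 1)"
    using sim_affine[OF assms(2), of "1 - u" "vC N 0" "vC N 1"] by (simp only:)
  moreover have "f w = (1 - u) *\<^sub>R f (vC N 0) + u *\<^sub>R f (vC N 1)" using u sim_affine[OF assms(1)] by simp
  ultimately have "g (cnj w) = u *\<^sub>R g (vC N 0) + (1 - u) *\<^sub>R g (vC N 1)"
    and "f w = (1 - u) *\<^sub>R g (vC N 1) + u *\<^sub>R g (vC N 0)" using assms(3,4) by simp_all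
  then show ?thesis by (simp add: add.commute)
qed

lemma seg_disj:
  assumes "(int a - int b) mod (4 * int N) \<noteq> 0" "(int a - int b) mod (4 * int N) \<noteq> 1"
    "(int a - int b) mod (4 * int N) \<noteq> 4 * int N - 1"
  shows "seg N a \<inter> seg N b = {}"
proof (rule ccontr)
  assume "seg N a \<inter> seg N b \<noteq> {}"
  then obtain z where z: "z \<in> seg N a" "z \<in> seg N b" by blast
  have l: "lam (int b) z = cs" using seg_lam z(2) by blast
  obtain u where u: "0 \<le> u" "u \<le> 1" "z = (1 - u) *\<^sub>R vC N a + u *\<^sub>R vC N (a + 1)"
    using z(1) unfolding seg_def in_segment by blast
  have l1: "lam (int b) (vC N a) < cs"
  proof -
    have "Re (E (2 * (int a - int b) - 1)) \<noteq> cs" using COS(2) assms by blast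
    then show ?thesis using COS(1)[of "int a - int b"] by (simp add: lam_vC)
  qed
  have l2: "lam (int b) (vC N (a + 1)) < cs"
  proof -
    have e1: "int (a + 1) - int b = (int a - int b) + 1" by simp
    have "(int (a + 1) - int b) mod (4 * int N) = ((int a - int b) mod (4 * int N) + 1) mod (4 * int N)"
      unfolding e1 by (simp only: mod_add_left_eq)
    moreover have "0 \<le> (int a - int b) mod (4 * int N)" "(int a - int b) mod (4 * int N) < 4 * int N"
      using Npos by auto
    ultimately have "(int (a + 1) - int b) mod (4 * int N) = (int a - int b) mod (4 * int N) + 1"
      using assms(3) by (simp add: mod_pos_pos_trivial)
    then have "(int (a + 1) - int b) mod (4 * int N) \<noteq> 0" "(int (a + 1) - int b) mod (4 * int N) \<noteq> 1"
      using assms(1) \<open>0 \<le> (int a - int b) mod (4 * int N)\<close> by auto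
    then have "Re (E (2 * (int (a + 1) - int b) - 1)) \<noteq> cs" using COS(2) by blast
    then show ?thesis using COS(1)[of "int (a + 1) - int b"] lam_vC[of "int b" "a + 1"] by simp
  qed
  have "lam (int b) z = (1 - u) * lam (int b) (vC N a) + u * lam (int b) (vC N (a + 1))"
    unfolding u(3) lam_def by (simp add: inner_add_right)
  also have "\<dots> < cs"
  proof (cases "u = 0")
    case True then show ?thesis using l1 by simp
  next
    case False
    then have "u > 0" using u by simp
    have "(1 - u) * lam (int b) (vC N a) \<le> (1 - u) * cs" using l1 u by (intro mult_left_mono) auto
    moreover have "u * lam (int b) (vC N (a + 1)) < u * cs" using l2 \<open>u > 0\<close> by simp
    ultimately show ?thesis by (simp add: algebra_simps)
  qed
  finally show False using l by simp
qed

end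

context NN
begin

definition KK :: "nat set" where "KK = {0, N, 3 * N - 1}"

definition sides :: "(complex \<Rightarrow> complex) set \<Rightarrow> complex set set" where
  "sides C = {t ` seg N k | t k. t \<in> C \<and> k \<in> KK}"

definition P0 :: "(complex \<Rightarrow> complex) set \<Rightarrow> nat \<Rightarrow> complex set set" where
  "P0 C a = {S \<in> sides C. S \<subseteq> seg N a}"

definition stp :: "(nat \<Rightarrow> bool) \<Rightarrow> (complex \<Rightarrow> complex) set \<Rightarrow> (complex \<Rightarrow> complex) set" where
  "stp ty C = {hh ty j \<circ> t | j t. j < 4 * N \<and> t \<in> C}"

abbreviation rt :: "nat \<Rightarrow> complex \<Rightarrow> complex" where "rt a \<equiv> (\<lambda>z. E (2 * int a) * z)"

definition InvA where "InvA C \<longleftrightarrow> (\<forall>t\<in>C. sim t \<and> t ` F0 N \<subseteq> F0 N)"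
definition InvB where "InvB C \<longleftrightarrow> (\<forall>S\<in>sides C. \<forall>S'\<in>sides C. S \<inter> S' \<noteq> {} \<longrightarrow> S = S')"
definition InvC where "InvC C a \<longleftrightarrow> (\<forall>S\<in>sides C. S \<inter> seg N a \<noteq> {} \<longrightarrow> S \<subseteq> seg N a)"
definition InvD where "InvD C a \<longleftrightarrow> P0 C a = (image (rt a)) ` P0 C 0"
definition InvD2 where "InvD2 C \<longleftrightarrow> (image cnj) ` P0 C 0 = P0 C 0"
definition InvE where "InvE C \<longleftrightarrow> (\<forall>t\<in>C. \<forall>t'\<in>C. \<forall>k\<in>KK. t 0 \<notin> t' ` seg N k)"
definition InvF where "InvF C a \<longleftrightarrow> (\<forall>t\<in>C. t 0 \<notin> seg N a)"

definition Inv where "Inv C \<longleftrightarrow> InvA C \<and> InvB C \<and> (\<forall>a\<in>KK. InvC C a \<and> InvD C a \<and> InvF C a) \<and> InvD2 C \<and> InvE C"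

lemma KK_simps: "0 \<in> KK" "N \<in> KK" "3 * N - 1 \<in> KK" unfolding KK_def by auto

lemma sides_stp: "sides (stp ty C) = {hh ty j ` S | j S. j < 4 * N \<and> S \<in> sides C}"
proof
  show "sides (stp ty C) \<subseteq> {hh ty j ` S | j S. j < 4 * N \<and> S \<in> sides C}"
  proof
    fix X assume "X \<in> sides (stp ty C)"
    then obtain t k where tk: "X = t ` seg N k" "t \<in> stp ty C" "k \<in> KK" unfolding sides_def by blast
    then obtain j t' where jt: "t = hh ty j \<circ> t'" "j < 4 * N" "t' \<in> C" unfolding stp_def by blast
    have "X = hh ty j ` (t' ` seg N k)" using tk jt by (simp add: image_comp)
    moreover have "t' ` seg N k \<in> sides C" using jt tk unfolding sides_def by blast
    ultimately show "X \<in> {hh ty j ` S | j S. j < 4 * N \<and> S \<in> sides C}" using jt by blast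
  qed
  show "{hh ty j ` S | j S. j < 4 * N \<and> S \<in> sides C} \<subseteq> sides (stp ty C)"
  proof
    fix X assume "X \<in> {hh ty j ` S | j S. j < 4 * N \<and> S \<in> sides C}"
    then obtain j S where jS: "X = hh ty j ` S" "j < 4 * N" "S \<in> sides C" by blast
    then obtain t k where tk: "S = t ` seg N k" "t \<in> C" "k \<in> KK" unfolding sides_def by blast
    have "X = (hh ty j \<circ> t) ` seg N k" using jS tk by (simp add: image_comp)
    moreover have "hh ty j \<circ> t \<in> stp ty C" using jS tk unfolding stp_def by blast
    ultimately show "X \<in> sides (stp ty C)" using tk unfolding sides_def by blast
  qed
qed

lemma seg_ne: "seg N k \<noteq> {}" unfolding seg_def by auto

lemma sides_ne: "S \<in> sides C \<Longrightarrow> S \<noteq> {}"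
  unfolding sides_def using seg_ne by auto

lemma sides_F0: "InvA C \<Longrightarrow> S \<in> sides C \<Longrightarrow> S \<subseteq> F0 N"
  unfolding sides_def InvA_def using seg_F0 by blast

lemma zero_F0: "0 \<in> F0 N"
proof -
  have "vC N (2 * N) = - vC N 0"
  proof -
    have "vC N (2 * N) = E (4 * int N) * vC N 0"
      unfolding vC_E E_add[symmetric] by (simp add: algebra_simps)
    then show ?thesis using E_4N by simp
  qed
  then have "0 = (1 - 1/2) *\<^sub>R vC N 0 + (1/2) *\<^sub>R vC N (2 * N)" by simp
  then have "0 \<in> closed_segment (vC N 0) (vC N (2 * N))" unfolding in_segment
    by (intro conjI exI[of _ "1/2"]) auto
  moreover have "closed_segment (vC N 0) (vC N (2 * N)) \<subseteq> F0 N"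
    by (intro closed_segment_subset V_F0 F0_convex)
  ultimately show ?thesis by blast
qed

lemma zero_notin_seg: "0 \<notin> seg N a"
proof
  assume "0 \<in> seg N a"
  then have "lam (int a) 0 = cs" by (rule seg_lam)
  then show False using cs_pos by (simp add: lam_def)
qed

lemma hh_inj_mem: "hh ty j x \<in> hh ty j ` S \<longleftrightarrow> x \<in> S"
  using inj_image_mem_iff[OF sim_inj[OF hh_sim]] .

lemma convex_seg: "w \<in> seg N 0 \<Longrightarrow> vC N k \<in> seg N 0 \<Longrightarrow> phi N k w \<in> seg N 0"
proof -
  assume w: "w \<in> seg N 0" and v: "vC N k \<in> seg N 0"
  have "(1 - r) *\<^sub>R vC N k + r *\<^sub>R w \<in> seg N 0"
    using convexD[OF convex_closed_segment, of "vC N k" "vC N 0" "vC N (0 + 1)" w "1 - r" r] w v r_pos r_lt1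
    unfolding seg_def by simp
  then show ?thesis unfolding phi_eq by (simp add: scaleR_conv_of_real algebra_simps)
qed

lemma hh_seg0_sub:
  assumes g: "Good ty a" and j: "j = a \<or> j = a + 1" and w: "w \<in> seg N 0"
  shows "hh ty j w \<in> seg N a"
  using j
proof
  assume ja: "j = a"
  have "phi N 0 w \<in> seg N 0" using convex_seg[OF w] unfolding seg_def by simp
  then have "E (2 * int a) * phi N 0 w \<in> seg N a" using rot_seg0[of a] by blast
  then show ?thesis using hh_good0[of ty a w] g ja unfolding Good_def by simp
next
  assume ja: "j = a + 1"
  have "cnj w \<in> seg N 0" using w cnj_seg0 by blast
  then have "phi N 1 (cnj w) \<in> seg N 0" using convex_seg unfolding seg_def by simp
  then have "E (2 * int a) * phi N 1 (cnj w) \<in> seg N a" using rot_seg0[of a] by blast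
  then show ?thesis using hh_good1[of ty a w] g ja unfolding Good_def by simp
qed

end

context NN
begin

lemma in_P0: "S \<in> sides C \<Longrightarrow> S \<subseteq> seg N a \<Longrightarrow> S \<in> P0 C a"
  unfolding P0_def by blast

lemma P0_sides: "p \<in> P0 C a \<Longrightarrow> p \<in> sides C" "p \<in> P0 C a \<Longrightarrow> p \<subseteq> seg N a"
  unfolding P0_def by auto

lemma ADJside:
  assumes I: "Inv C" and j: "j < 4 * N" and j': "j' = (j + 1) mod (4 * N)"
    and S: "S \<in> sides C" and S': "S' \<in> sides C" and x: "x \<in> S" and y: "y \<in> S'"
    and eq: "hh ty j x = hh ty j' y"
  shows "hh ty j ` S = hh ty j' ` S'"
proof -
  have IA: "InvA C" and IB: "InvB C" and IC: "\<And>a. a \<in> KK \<Longrightarrow> InvC C a"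
    and ID: "\<And>a. a \<in> KK \<Longrightarrow> InvD C a" and ID2: "InvD2 C"
    using I unfolding Inv_def by auto
  have xF: "x \<in> F0 N" using sides_F0[OF IA S] x by blast
  have yF: "y \<in> F0 N" using sides_F0[OF IA S'] y by blast
  obtain \<alpha> \<beta> where ab: "\<alpha> \<in> {N, 3 * N - 1}" "\<beta> \<in> {N, 3 * N - 1}" "x \<in> seg N \<alpha>" "y \<in> seg N \<beta>"
    and same: "hh ty j ` seg N \<alpha> = hh ty j' ` seg N \<beta>"
    using ADJ[OF j j' xF yF eq] by blast
  have aK: "\<alpha> \<in> KK" "\<beta> \<in> KK" using ab(1,2) unfolding KK_def by auto
  have "S \<subseteq> seg N \<alpha>" using IC[OF aK(1)] S x ab(3) unfolding InvC_def by blast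
  then have "S \<in> P0 C \<alpha>" using in_P0[OF S] by blast
  then obtain p where p: "p \<in> P0 C 0" "S = rt \<alpha> ` p" using ID[OF aK(1)] unfolding InvD_def by blast
  have "S' \<subseteq> seg N \<beta>" using IC[OF aK(2)] S' y ab(4) unfolding InvC_def by blast
  then have "S' \<in> P0 C \<beta>" using in_P0[OF S'] by blast
  then obtain p' where p': "p' \<in> P0 C 0" "S' = rt \<beta> ` p'" using ID[OF aK(2)] unfolding InvD_def by blast
  define f1 where "f1 = hh ty j \<circ> rt \<alpha>"
  define f2 where "f2 = hh ty j' \<circ> rt \<beta>"
  have s1: "sim f1" unfolding f1_def by (intro sim_comp hh_sim rot_sim)
  have s2: "sim f2" unfolding f2_def by (intro sim_comp hh_sim rot_sim)
  have "f1 ` seg N 0 = f2 ` seg N 0"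
    unfolding f1_def f2_def image_comp[symmetric] rot_seg0 using same .
  then have "closed_segment (f1 (vC N 0)) (f1 (vC N (0 + 1))) = closed_segment (f2 (vC N 0)) (f2 (vC N (0 + 1)))"
    unfolding seg_def sim_seg[OF s1] sim_seg[OF s2] .
  then have "{f1 (vC N 0), f1 (vC N 1)} = {f2 (vC N 0), f2 (vC N 1)}" by simp
  then have cases: "(f1 (vC N 0) = f2 (vC N 0) \<and> f1 (vC N 1) = f2 (vC N 1))
      \<or> (f1 (vC N 0) = f2 (vC N 1) \<and> f1 (vC N 1) = f2 (vC N 0))"
    by (auto simp: doubleton_eq_iff)
  have p'0: "p' \<subseteq> seg N 0" using p'(1) P0_sides by blast
  obtain p'' where p'': "p'' \<in> P0 C 0" "f2 ` p' = f1 ` p''"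
    using cases
  proof
    assume c: "f1 (vC N 0) = f2 (vC N 0) \<and> f1 (vC N 1) = f2 (vC N 1)"
    have "\<forall>w\<in>p'. f2 w = f1 w"
      using aff_agree[OF s2 s1, of "vC N 0" "vC N (0 + 1)"] c p'0 unfolding seg_def by auto
    then have "f2 ` p' = f1 ` p'" by (auto simp: image_iff)
    then show thesis using that p'(1) by blast
  next
    assume c: "f1 (vC N 0) = f2 (vC N 1) \<and> f1 (vC N 1) = f2 (vC N 0)"
    have "\<forall>w\<in>p'. f2 w = f1 (cnj w)"
      using aff_agree_swap[OF s2 s1] c p'0 by auto
    then have "f2 ` p' = f1 ` (cnj ` p')" by (auto simp: image_iff image_comp)
    moreover have "cnj ` p' \<in> P0 C 0" using ID2 p'(1) unfolding InvD2_def by blast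
    ultimately show thesis using that by blast
  qed
  have e1: "hh ty j ` S = f1 ` p" unfolding p(2) f1_def image_comp ..
  have e2: "hh ty j' ` S' = f1 ` p''"
  proof -
    have "hh ty j' ` S' = f2 ` p'" unfolding p'(2) f2_def image_comp ..
    then show ?thesis using p''(2) by simp
  qed
  have "hh ty j x \<in> f1 ` p" using e1 x by blast
  moreover have "hh ty j x \<in> f1 ` p''" using e2 y eq by blast
  ultimately have "p \<inter> p'' \<noteq> {}" using sim_inj[OF s1] by (auto simp: inj_eq)
  then have "p = p''" using IB p(1) p''(1) P0_sides unfolding InvB_def by blast
  then show ?thesis using e1 e2 by simp
qed


lemma stepA: "InvA C \<Longrightarrow> InvA (stp ty C)"
  unfolding InvA_def
proof
  fix t1 assume I: "\<forall>t\<in>C. sim t \<and> t ` F0 N \<subseteq> F0 N" and "t1 \<in> stp ty C"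
  then obtain j t where jt: "t1 = hh ty j \<circ> t" "t \<in> C" unfolding stp_def by blast
  have "sim t1" using jt I sim_comp hh_sim by blast
  moreover have "t1 ` F0 N \<subseteq> F0 N"
  proof
    fix z assume "z \<in> t1 ` F0 N"
    then obtain x where x: "x \<in> F0 N" "z = hh ty j (t x)" using jt by auto
    have "t x \<in> F0 N" using I jt(2) x(1) by blast
    then show "z \<in> F0 N" using x(2) hh_F0 by simp
  qed
  ultimately show "sim t1 \<and> t1 ` F0 N \<subseteq> F0 N" by blast
qed

lemma stepB:
  assumes I: "Inv C"
  shows "InvB (stp ty C)"
  unfolding InvB_def sides_stp
proof (intro ballI impI)
  fix S1 S2
  assume S1: "S1 \<in> {hh ty j ` S | j S. j < 4 * N \<and> S \<in> sides C}"
    and S2: "S2 \<in> {hh ty j ` S | j S. j < 4 * N \<and> S \<in> sides C}"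
    and ne: "S1 \<inter> S2 \<noteq> {}"
  obtain j S where jS: "S1 = hh ty j ` S" "j < 4 * N" "S \<in> sides C" using S1 by blast
  obtain j' S' where jS': "S2 = hh ty j' ` S'" "j' < 4 * N" "S' \<in> sides C" using S2 by blast
  obtain x y where xy: "x \<in> S" "y \<in> S'" "hh ty j x = hh ty j' y" using ne jS jS' by auto
  have IA: "InvA C" and IB: "InvB C" using I unfolding Inv_def by auto
  have xF: "x \<in> F0 N" using sides_F0[OF IA jS(3)] xy by blast
  have yF: "y \<in> F0 N" using sides_F0[OF IA jS'(3)] xy by blast
  consider "j = j'" | "j' = (j + 1) mod (4 * N)" | "j = (j' + 1) mod (4 * N)"
    | "2 \<le> (int j - int j') mod (4 * int N) \<and> (int j - int j') mod (4 * int N) \<le> 4 * int N - 2"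
    using idx[OF jS(2) jS'(2)] by blast
  then show "S1 = S2"
  proof cases
    case 1
    then have "x = y" using xy sim_inj[OF hh_sim] by (auto simp: inj_eq)
    then have "S \<inter> S' \<noteq> {}" using xy by blast
    then have "S = S'" using IB jS(3) jS'(3) unfolding InvB_def by blast
    then show ?thesis using jS jS' 1 by simp
  next
    case 2
    then show ?thesis using ADJside[OF I jS(2) 2 jS(3) jS'(3) xy] jS jS' by simp
  next
    case 3
    then show ?thesis using ADJside[OF I jS'(2) 3 jS'(3) jS(3) xy(2,1) xy(3)[symmetric]] jS jS' by simp
  next
    case 4
    then show ?thesis using NONADJ[OF jS(2) jS'(2) _ _ xF yF] xy by blast
  qed
qed

lemma stepE:
  assumes I: "Inv C"
  shows "InvE (stp ty C)"
  unfolding InvE_def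
proof (intro ballI notI)
  fix t1 t2 k
  assume t1: "t1 \<in> stp ty C" and t2: "t2 \<in> stp ty C" and k: "k \<in> KK" and m: "t1 0 \<in> t2 ` seg N k"
  obtain j t where jt: "t1 = hh ty j \<circ> t" "j < 4 * N" "t \<in> C" using t1 unfolding stp_def by blast
  obtain j' t' where jt': "t2 = hh ty j' \<circ> t'" "j' < 4 * N" "t' \<in> C" using t2 unfolding stp_def by blast
  have IA: "InvA C" and IE: "InvE C" and IF: "\<And>a. a \<in> KK \<Longrightarrow> InvF C a"
    using I unfolding Inv_def by auto
  obtain y where y: "y \<in> t' ` seg N k" "hh ty j (t 0) = hh ty j' y" using m jt jt' by auto
  have xF: "t 0 \<in> F0 N" using IA jt(3) zero_F0 unfolding InvA_def by blast
  have yF: "y \<in> F0 N" using IA jt'(3) y(1) seg_F0 unfolding InvA_def by blast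
  consider "j = j'" | "j' = (j + 1) mod (4 * N)" | "j = (j' + 1) mod (4 * N)"
    | "2 \<le> (int j - int j') mod (4 * int N) \<and> (int j - int j') mod (4 * int N) \<le> 4 * int N - 2"
    using idx[OF jt(2) jt'(2)] by blast
  then show False
  proof cases
    case 1
    then have "t 0 = y" using y sim_inj[OF hh_sim] by (auto simp: inj_eq)
    then show False using IE jt(3) jt'(3) k y(1) unfolding InvE_def by blast
  next
    case 2
    obtain \<alpha> where "\<alpha> \<in> {N, 3 * N - 1}" "t 0 \<in> seg N \<alpha>" using ADJ[OF jt(2) 2 xF yF y(2)] by blast
    moreover have "\<alpha> \<in> KK" using calculation(1) unfolding KK_def by auto
    ultimately show False using IF jt(3) unfolding InvF_def by blast
  next
    case 3
    obtain \<beta> where "\<beta> \<in> {N, 3 * N - 1}" "t 0 \<in> seg N \<beta>" using ADJ[OF jt'(2) 3 yF xF y(2)[symmetric]] by blast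
    moreover have "\<beta> \<in> KK" using calculation(1) unfolding KK_def by auto
    ultimately show False using IF jt(3) unfolding InvF_def by blast
  next
    case 4
    then show False using NONADJ[OF jt(2) jt'(2) _ _ xF yF] y(2) by blast
  qed
qed

lemma stepF:
  assumes I: "Inv C" and g: "Good ty a"
  shows "InvF (stp ty C) a"
  unfolding InvF_def
proof (intro ballI notI)
  fix t1 assume t1: "t1 \<in> stp ty C" and m: "t1 0 \<in> seg N a"
  obtain j t where jt: "t1 = hh ty j \<circ> t" "j < 4 * N" "t \<in> C" using t1 unfolding stp_def by blast
  have IA: "InvA C" and IF: "InvF C 0" using I KK_simps unfolding Inv_def by auto
  have xF: "t 0 \<in> F0 N" using IA jt(3) zero_F0 unfolding InvA_def by blast
  have "t 0 \<in> seg N 0" using loc[OF g jt(2) xF] m jt(1) by simp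
  then show False using IF jt(3) unfolding InvF_def by blast
qed

lemma stepC:
  assumes I: "Inv C" and g: "Good ty a"
  shows "InvC (stp ty C) a"
  unfolding InvC_def sides_stp
proof (intro ballI impI)
  fix S1 assume S1: "S1 \<in> {hh ty j ` S | j S. j < 4 * N \<and> S \<in> sides C}" and ne: "S1 \<inter> seg N a \<noteq> {}"
  obtain j S where jS: "S1 = hh ty j ` S" "j < 4 * N" "S \<in> sides C" using S1 by blast
  have IA: "InvA C" and IC: "InvC C 0" using I KK_simps unfolding Inv_def by auto
  obtain x where x: "x \<in> S" "hh ty j x \<in> seg N a" using ne jS by auto
  have xF: "x \<in> F0 N" using sides_F0[OF IA jS(3)] x by blast
  have l: "(j = a \<or> j = a + 1) \<and> x \<in> seg N 0" using loc[OF g jS(2) xF x(2)] .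
  then have "S \<subseteq> seg N 0" using IC jS(3) x(1) unfolding InvC_def by blast
  then show "S1 \<subseteq> seg N a" using hh_seg0_sub[OF g] l jS(1) by blast
qed

definition QQ :: "(complex \<Rightarrow> complex) set \<Rightarrow> complex set set" where
  "QQ C = (image (phi N 0)) ` P0 C 0 \<union> (\<lambda>p. phi N 1 ` cnj ` p) ` P0 C 0"

lemma P0_stp:
  assumes I: "Inv C" and g: "Good ty a"
  shows "P0 (stp ty C) a = (image (rt a)) ` QQ C"
proof
  have IA: "InvA C" and IC: "InvC C 0" using I KK_simps unfolding Inv_def by auto
  have g0: "ty a" and g1: "\<not> ty (a + 1)" and a4: "a + 1 < 4 * N" using g unfolding Good_def by auto
  show "P0 (stp ty C) a \<subseteq> (image (rt a)) ` QQ C"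
  proof
    fix S1 assume "S1 \<in> P0 (stp ty C) a"
    then have S1: "S1 \<in> sides (stp ty C)" "S1 \<subseteq> seg N a" unfolding P0_def by auto
    obtain j S where jS: "S1 = hh ty j ` S" "j < 4 * N" "S \<in> sides C" using S1(1) unfolding sides_stp by blast
    obtain x where x: "x \<in> S" using sides_ne[OF jS(3)] by blast
    have xF: "x \<in> F0 N" using sides_F0[OF IA jS(3)] x by blast
    have l: "(j = a \<or> j = a + 1) \<and> x \<in> seg N 0" using loc[OF g jS(2) xF] S1(2) jS(1) x by blast
    then have "S \<subseteq> seg N 0" using IC jS(3) x unfolding InvC_def by blast
    then have SP: "S \<in> P0 C 0" using in_P0[OF jS(3)] by blast
    show "S1 \<in> (image (rt a)) ` QQ C"
      using l
    proof (elim conjE disjE)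
      assume "j = a"
      then have "S1 = rt a ` (phi N 0 ` S)" using jS(1) hh_good0[of ty a, OF g0] by (auto simp: image_comp comp_def)
      then show ?thesis using SP unfolding QQ_def by blast
    next
      assume "j = a + 1"
      then have "S1 = rt a ` (phi N 1 ` cnj ` S)" using jS(1) hh_good1[of ty a, OF g1] by (auto simp: image_comp comp_def)
      then show ?thesis using SP unfolding QQ_def by blast
    qed
  qed
  show "(image (rt a)) ` QQ C \<subseteq> P0 (stp ty C) a"
  proof
    fix X assume "X \<in> (image (rt a)) ` QQ C"
    then obtain p where p: "p \<in> P0 C 0" "X = rt a ` phi N 0 ` p \<or> X = rt a ` phi N 1 ` cnj ` p"
      unfolding QQ_def by blast
    have ps: "p \<in> sides C" "p \<subseteq> seg N 0" using p(1) P0_sides by auto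
    from p(2) show "X \<in> P0 (stp ty C) a"
    proof
      assume X: "X = rt a ` phi N 0 ` p"
      then have "X = hh ty a ` p" using hh_good0[of ty a, OF g0] by (auto simp: image_comp comp_def)
      moreover have "hh ty a ` p \<in> sides (stp ty C)"
      proof -
        have "a < 4 * N" using a4 by simp
        then show ?thesis unfolding sides_stp using ps(1) by blast
      qed
      moreover have "hh ty a ` p \<subseteq> seg N a" using hh_seg0_sub[OF g] ps by blast
      ultimately show ?thesis unfolding P0_def by blast
    next
      assume X: "X = rt a ` phi N 1 ` cnj ` p"
      then have "X = hh ty (a + 1) ` p" using hh_good1[of ty a, OF g1] by (auto simp: image_comp comp_def)
      moreover have "hh ty (a + 1) ` p \<in> sides (stp ty C)"
        unfolding sides_stp using ps(1) a4 by blast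
      moreover have "hh ty (a + 1) ` p \<subseteq> seg N a" using hh_seg0_sub[OF g] ps by blast
      ultimately show ?thesis unfolding P0_def by blast
    qed
  qed
qed

lemma rt0: "rt 0 ` X = X" by simp

lemma stepD:
  assumes I: "Inv C" and g0: "Good ty 0" and g: "Good ty a"
  shows "InvD (stp ty C) a"
proof -
  have "P0 (stp ty C) 0 = QQ C" using P0_stp[OF I g0] by (simp add: image_ident)
  then show ?thesis unfolding InvD_def using P0_stp[OF I g] by simp
qed

lemma cnj_phi0: "cnj (phi N 0 x) = phi N 1 (cnj x)"
  unfolding phi_eq using cnj_vC0 by simp

lemma cnj_phi1: "cnj (phi N 1 x) = phi N 0 (cnj x)"
  unfolding phi_eq using cnj_vC1 by simp

lemma stepD2:
  assumes I: "Inv C" and g0: "Good ty 0"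
  shows "InvD2 (stp ty C)"
proof -
  have P: "P0 (stp ty C) 0 = QQ C" using P0_stp[OF I g0] by (simp add: image_ident)
  have sub: "(image cnj) ` QQ C \<subseteq> QQ C"
  proof
    fix X assume "X \<in> (image cnj) ` QQ C"
    then obtain p where p: "p \<in> P0 C 0" "X = cnj ` phi N 0 ` p \<or> X = cnj ` phi N 1 ` cnj ` p"
      unfolding QQ_def by blast
    from p(2) show "X \<in> QQ C"
    proof
      assume "X = cnj ` phi N 0 ` p"
      then have "X = phi N 1 ` cnj ` p" by (auto simp: image_comp comp_def cnj_phi0)
      then show ?thesis using p(1) unfolding QQ_def by blast
    next
      assume "X = cnj ` phi N 1 ` cnj ` p"
      moreover have c1: "\<And>x. cnj (phi N (Suc 0) (cnj x)) = phi N 0 x" using cnj_phi1 by simp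
      ultimately have "X = phi N 0 ` p" by (simp add: image_comp comp_def)
      then show ?thesis using p(1) unfolding QQ_def by blast
    qed
  qed
  have "QQ C \<subseteq> (image cnj) ` QQ C"
  proof
    fix X assume X: "X \<in> QQ C"
    then have "cnj ` X \<in> QQ C" using sub by blast
    moreover have "X = cnj ` (cnj ` X)" by (simp add: image_comp comp_def)
    ultimately show "X \<in> (image cnj) ` QQ C" by blast
  qed
  with sub show ?thesis unfolding InvD2_def P by blast
qed

end

context NN
begin

lemma mod_eqI: "0 \<le> v \<Longrightarrow> v < m \<Longrightarrow> u = v + m * t \<Longrightarrow> u mod m = (v::int)"
  by (simp add: mod_pos_pos_trivial)

lemma KK_sep:
  assumes a: "a \<in> KK" and b: "b \<in> KK" and ne: "a \<noteq> b"
  shows "seg N a \<inter> seg N b = {}"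
proof -
  have n: "int N \<ge> 2" using N2 by simp
  have i3: "int (3 * N - 1) = 3 * int N - 1" using N2 by simp
  have "(int a - int b) mod (4 * int N) \<in> {int N, 3 * int N, 3 * int N - 1, int N + 1, 2 * int N - 1, 2 * int N + 1}"
  proof -
    consider "a = 0" "b = N" | "a = N" "b = 0" | "a = 0" "b = 3 * N - 1" | "a = 3 * N - 1" "b = 0"
      | "a = N" "b = 3 * N - 1" | "a = 3 * N - 1" "b = N"
      using a b ne unfolding KK_def by auto
    then show ?thesis
    proof cases
      case 1 then have "(int a - int b) mod (4 * int N) = 3 * int N" using n by (intro mod_eqI[where t="-1"]) auto
      then show ?thesis by simp
    next
      case 2 then have "(int a - int b) mod (4 * int N) = int N" using n by (intro mod_eqI[where t="0"]) auto
      then show ?thesis by simp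
    next
      case 3 then have "(int a - int b) mod (4 * int N) = int N + 1" using n i3 by (intro mod_eqI[where t="-1"]) auto
      then show ?thesis by simp
    next
      case 4 then have "(int a - int b) mod (4 * int N) = 3 * int N - 1" using n i3 by (intro mod_eqI[where t="0"]) auto
      then show ?thesis by simp
    next
      case 5 then have "(int a - int b) mod (4 * int N) = 2 * int N + 1" using n i3 by (intro mod_eqI[where t="-1"]) auto
      then show ?thesis by simp
    next
      case 6 then have "(int a - int b) mod (4 * int N) = 2 * int N - 1" using n i3 by (intro mod_eqI[where t="0"]) auto
      then show ?thesis by simp
    qed
  qed
  then show ?thesis using n by (intro seg_disj) auto
qed

lemma sides_id: "sides {id} = {seg N k | k. k \<in> KK}"
  unfolding sides_def by auto

lemma P0_id: "a \<in> KK \<Longrightarrow> P0 {id} a = {seg N a}"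
  unfolding P0_def sides_id using KK_sep seg_ne by blast

lemma Inv_base: "Inv {id}"
proof -
  have A: "InvA {id}" unfolding InvA_def using sim_id by simp
  have B: "InvB {id}" unfolding InvB_def sides_id using KK_sep by blast
  have C: "InvC {id} a" if "a \<in> KK" for a unfolding InvC_def sides_id using KK_sep that by blast
  have D: "InvD {id} a" if "a \<in> KK" for a
    unfolding InvD_def P0_id[OF that] P0_id[OF KK_simps(1)] using rot_seg0[of a] by simp
  have D2: "InvD2 {id}" unfolding InvD2_def P0_id[OF KK_simps(1)] using cnj_seg0 by simp
  have E: "InvE {id}" unfolding InvE_def using zero_notin_seg by simp
  have F: "InvF {id} a" for a unfolding InvF_def using zero_notin_seg by simp
  show ?thesis unfolding Inv_def using A B C D D2 E F by blast
qed

lemma Good_T: "a \<in> KK \<Longrightarrow> Good tyT a"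
proof -
  assume a: "a \<in> KK"
  have n: "N \<ge> 2" using N2 .
  consider "a = 0" | "a = N" | "a = 3 * N - 1" using a unfolding KK_def by auto
  then show ?thesis
  proof cases
    case 1 then show ?thesis unfolding Good_def tyT_def using n by auto
  next
    case 2 then show ?thesis unfolding Good_def tyT_def using n by auto
  next
    case 3
    have "even (3 * N - 1) \<longleftrightarrow> odd N" using n by (cases "even N") (auto simp: even_diff_nat)
    moreover have "3 * N - 1 + 1 = 3 * N" using n by simp
    ultimately show ?thesis unfolding Good_def tyT_def using n 3 by auto
  qed
qed

lemma Good_even: "even a \<Longrightarrow> a + 1 < 4 * N \<Longrightarrow> Good (\<lambda>j. even j) a"
  unfolding Good_def by simp

lemma Inv_step: "Inv C \<Longrightarrow> Inv (stp tyT C)"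
proof -
  assume I: "Inv C"
  have g0: "Good tyT 0" using Good_T KK_simps by blast
  show ?thesis unfolding Inv_def
    using stepA[of C tyT] stepB[OF I] stepC[OF I] stepD[OF I g0] stepF[OF I] stepD2[OF I g0] stepE[OF I] Good_T I
    unfolding Inv_def by blast
qed

lemma words_Suc: "words N (Suc m) = {j # w | j w. j < 4 * N \<and> w \<in> words N m}"
  unfolding words_def Lam_def by (auto simp: length_Suc_conv)

lemma Tcells_Suc: "psitw N ` words N (Suc m) = stp tyT (psitw N ` words N m)"
proof
  show "psitw N ` words N (Suc m) \<subseteq> stp tyT (psitw N ` words N m)"
  proof
    fix f assume "f \<in> psitw N ` words N (Suc m)"
    then obtain j w where "f = psitw N (j # w)" "j < 4 * N" "w \<in> words N m" unfolding words_Suc by blast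
    then have "f = hh tyT j \<circ> psitw N w" by (simp add: psit_hh)
    then show "f \<in> stp tyT (psitw N ` words N m)" unfolding stp_def
      using \<open>j < 4 * N\<close> \<open>w \<in> words N m\<close> by blast
  qed
  show "stp tyT (psitw N ` words N m) \<subseteq> psitw N ` words N (Suc m)"
  proof
    fix f assume "f \<in> stp tyT (psitw N ` words N m)"
    then obtain j w where jw: "f = hh tyT j \<circ> psitw N w" "j < 4 * N" "w \<in> words N m" unfolding stp_def by blast
    then have "f = psitw N (j # w)" by (simp add: psit_hh)
    moreover have "j # w \<in> words N (Suc m)" unfolding words_Suc using jw by blast
    ultimately show "f \<in> psitw N ` words N (Suc m)" by blast
  qed
qed

lemma words_0: "words N 0 = {[]}" unfolding words_def by auto

lemma Inv_T: "Inv (psitw N ` words N m)"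
proof (induction m)
  case 0 then show ?case using Inv_base by (simp add: words_0 id_def)
next
  case (Suc m) then show ?case using Inv_step Tcells_Suc by simp
qed

lemma Scells: "psiw N ` words N (Suc m) = stp (\<lambda>j. even j) (psitw N ` words N m)"
proof
  show "psiw N ` words N (Suc m) \<subseteq> stp (\<lambda>j. even j) (psitw N ` words N m)"
  proof
    fix f assume "f \<in> psiw N ` words N (Suc m)"
    then obtain j w where "f = psiw N (j # w)" "j < 4 * N" "w \<in> words N m" unfolding words_Suc by blast
    then have "f = hh (\<lambda>j. even j) j \<circ> psitw N w" by (simp add: psi_hh)
    then show "f \<in> stp (\<lambda>j. even j) (psitw N ` words N m)" unfolding stp_def
      using \<open>j < 4 * N\<close> \<open>w \<in> words N m\<close> by blast
  qed
  show "stp (\<lambda>j. even j) (psitw N ` words N m) \<subseteq> psiw N ` words N (Suc m)"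
  proof
    fix f assume "f \<in> stp (\<lambda>j. even j) (psitw N ` words N m)"
    then obtain j w where jw: "f = hh (\<lambda>j. even j) j \<circ> psitw N w" "j < 4 * N" "w \<in> words N m" unfolding stp_def by blast
    then have "f = psiw N (j # w)" by (simp add: psi_hh)
    moreover have "j # w \<in> words N (Suc m)" unfolding words_Suc using jw by blast
    ultimately show "f \<in> psiw N ` words N (Suc m)" by blast
  qed
qed

lemma S_facts:
  assumes m: "1 \<le> m"
  shows "InvA (psiw N ` words N m)" "InvB (psiw N ` words N m)" "InvE (psiw N ` words N m)"
    "\<And>a. even a \<Longrightarrow> a + 1 < 4 * N \<Longrightarrow> InvC (psiw N ` words N m) a"
proof -
  obtain m' where m': "m = Suc m'" using m by (cases m) auto
  have I: "Inv (psitw N ` words N m')" by (rule Inv_T)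
  have g0: "Good (\<lambda>j. even j) 0" using Good_even[of 0] N2 by simp
  show "InvA (psiw N ` words N m)" unfolding m' Scells using stepA I unfolding Inv_def by blast
  show "InvB (psiw N ` words N m)" unfolding m' Scells using stepB I by blast
  show "InvE (psiw N ` words N m)" unfolding m' Scells using stepE I by blast
  show "\<And>a. even a \<Longrightarrow> a + 1 < 4 * N \<Longrightarrow> InvC (psiw N ` words N m) a"
    unfolding m' Scells using stepC[OF I Good_even] by blast
qed

end

context NN
begin

lemma rot_vC_int: "\<exists>j'\<in>Lam N. E (2 * a) * vC N j = vC N j'"
proof -
  define j' where "j' = nat ((int j + a) mod (4 * int N))"
  have jl: "j' \<in> Lam N" unfolding j'_def Lam_def using Npos
    by (simp add: nat_less_iff)
  have "E (2 * a) * vC N j = vC N j'"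
    unfolding vC_E E_add[symmetric]
  proof (rule E_eqI[where t="(int j + a) div (4 * int N)"])
    have "int j' = (int j + a) mod (4 * int N)" unfolding j'_def using Npos by simp
    moreover have "int j + a = (int j + a) mod (4 * int N) + 4 * int N * ((int j + a) div (4 * int N))" by simp
    ultimately show "2 * a + (2 * int j - 1) = 2 * int j' - 1 + 8 * int N * ((int j + a) div (4 * int N))"
      by linarith
  qed
  then show ?thesis using jl by blast
qed

lemma cnj_vC_in: "\<exists>j'\<in>Lam N. cnj (vC N j) = vC N j'"
  using cnj_vC[of j] vC_mod[of "4 * N * (j + 1) + 1 - j"] Npos unfolding Lam_def by auto

lemma Phi_rot:
  assumes "\<forall>x\<in>A. \<forall>a. E (2 * a) * x \<in> A" "z \<in> Phi N A"
  shows "E (2 * a) * z \<in> Phi N A"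
proof -
  obtain j x where jx: "j \<in> Lam N" "x \<in> A" "z = phi N j x" using assms(2) unfolding Phi_def by blast
  obtain j' where j': "j' \<in> Lam N" "E (2 * a) * vC N j = vC N j'" using rot_vC_int by blast
  have "E (2 * a) * z = phi N j' (E (2 * a) * x)"
    unfolding jx(3) phi_eq j'(2)[symmetric] by (simp add: algebra_simps)
  moreover have "E (2 * a) * x \<in> A" using assms(1) jx(2) by blast
  ultimately show ?thesis unfolding Phi_def using j'(1) by blast
qed

lemma Phi_cnj:
  assumes "\<forall>x\<in>A. cnj x \<in> A" "z \<in> Phi N A"
  shows "cnj z \<in> Phi N A"
proof -
  obtain j x where jx: "j \<in> Lam N" "x \<in> A" "z = phi N j x" using assms(2) unfolding Phi_def by blast
  obtain j' where j': "j' \<in> Lam N" "cnj (vC N j) = vC N j'" using cnj_vC_in by blast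
  have "cnj z = phi N j' (cnj x)"
    unfolding jx(3) phi_eq j'(2)[symmetric] by simp
  moreover have "cnj x \<in> A" using assms(1) jx(2) by blast
  ultimately show ?thesis unfolding Phi_def using j'(1) by blast
qed

lemma Fm_Suc: "Fm N (Suc m) = Phi N (Fm N m)"
  unfolding Fm_def by simp

lemma Fm_inv: "(\<forall>x\<in>Fm N m. \<forall>a. E (2 * a) * x \<in> Fm N m) \<and> (\<forall>x\<in>Fm N m. cnj x \<in> Fm N m)"
proof (induction m)
  case 0
  show ?case unfolding Fm_def using rot_F0_int cnj_F0 by simp
next
  case (Suc m)
  then show ?case unfolding Fm_Suc using Phi_rot Phi_cnj by blast
qed

lemma hh_Fm: "j < 4 * N \<Longrightarrow> x \<in> Fm N m \<Longrightarrow> hh ty j x \<in> Fm N (Suc m)"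
proof -
  assume j: "j < 4 * N" and x: "x \<in> Fm N m"
  have c: "cnj x \<in> Fm N m" using Fm_inv x by blast
  have R: "(if ty j then E (2 * int j) * x else E (2 * (int j - 1)) * cnj x) \<in> Fm N m"
    using Fm_inv x c by (simp only: split: if_split) blast
  have "hh ty j x = phi N j (if ty j then E (2 * int j) * x else E (2 * (int j - 1)) * cnj x)"
    unfolding hh_def by (simp add: algebra_simps)
  moreover have "j \<in> Lam N" using j unfolding Lam_def by simp
  ultimately show ?thesis unfolding Fm_Suc Phi_def using R by blast
qed

lemma psitw_Fm: "set w \<subseteq> Lam N \<Longrightarrow> x \<in> F0 N \<Longrightarrow> psitw N w x \<in> Fm N (length w)"
proof (induction w)
  case Nil then show ?case unfolding Fm_def by simp
next
  case (Cons j w)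
  then have "psitw N w x \<in> Fm N (length w)" "j < 4 * N" unfolding Lam_def by auto
  then show ?case using hh_Fm by (simp add: psit_hh)
qed

lemma psiw_Fm: "w \<in> words N m \<Longrightarrow> x \<in> F0 N \<Longrightarrow> psiw N w x \<in> Fm N m"
proof (cases w)
  case Nil
  assume "w \<in> words N m" "x \<in> F0 N"
  then show ?thesis using Nil unfolding words_def Fm_def by auto
next
  case (Cons j v)
  assume w: "w \<in> words N m" and x: "x \<in> F0 N"
  then have "set v \<subseteq> Lam N" "j < 4 * N" "m = Suc (length v)" using Cons unfolding words_def Lam_def by auto
  then show ?thesis using psitw_Fm[OF _ x] hh_Fm Cons by (simp add: psi_hh)
qed

end

locale NM = NN +
  fixes m :: nat
  assumes m1: "1 \<le> m"
begin

abbreviation W where "W \<equiv> words N m"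
abbreviation g where "g \<equiv> psiw N"
definition Mk :: "nat \<Rightarrow> complex" where "Mk k = (vC N k + vC N (k + 1)) / 2"
definition ends :: "nat list \<Rightarrow> nat \<Rightarrow> complex set" where "ends w k = {g w (vC N k), g w (vC N (k + 1))}"
definition midp :: "nat list \<Rightarrow> nat \<Rightarrow> complex" where "midp w k = g w (Mk k)"
definition Cen :: "complex set" where "Cen = (\<lambda>w. g w 0) ` W"
definition Mid :: "complex \<Rightarrow> complex" where
  "Mid x = (THE M. \<exists>w\<in>W. \<exists>k\<in>KK. x \<in> ends w k \<and> M = midp w k)"
definition Ends :: "complex \<Rightarrow> complex set" where
  "Ends M = (THE S. \<exists>w\<in>W. \<exists>k\<in>KK. M = midp w k \<and> S = ends w k)"

lemma gsim: "w \<in> W \<Longrightarrow> sim (g w)"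
  using S_facts(1)[OF m1] unfolding InvA_def by blast

lemma side_eq: "w \<in> W \<Longrightarrow> g w ` seg N k = closed_segment (g w (vC N k)) (g w (vC N (k + 1)))"
  unfolding seg_def by (rule sim_seg[OF gsim])

lemma side_in_sides: "w \<in> W \<Longrightarrow> k \<in> KK \<Longrightarrow> g w ` seg N k \<in> sides (g ` W)"
  unfolding sides_def by blast

lemma midp_eq: "w \<in> W \<Longrightarrow> midp w k = (g w (vC N k) + g w (vC N (k + 1))) / 2"
  unfolding midp_def Mk_def by (rule sim_mid[OF gsim])

lemma sideU:
  assumes w: "w \<in> W" "w' \<in> W" and k: "k \<in> KK" "k' \<in> KK"
    and ne: "g w ` seg N k \<inter> g w' ` seg N k' \<noteq> {}"
  shows "ends w k = ends w' k' \<and> midp w k = midp w' k'"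
proof -
  have B: "\<forall>S\<in>sides (g ` W). \<forall>S'\<in>sides (g ` W). S \<inter> S' \<noteq> {} \<longrightarrow> S = S'"
    using S_facts(2)[OF m1] unfolding InvB_def .
  have "g w ` seg N k = g w' ` seg N k'"
    using B[rule_format, OF side_in_sides[OF w(1) k(1)] side_in_sides[OF w(2) k(2)] ne] .
  then have "closed_segment (g w (vC N k)) (g w (vC N (k + 1))) = closed_segment (g w' (vC N k')) (g w' (vC N (k' + 1)))"
    using side_eq w by simp
  then have e: "ends w k = ends w' k'" unfolding ends_def by simp
  then have "(g w (vC N k) = g w' (vC N k') \<and> g w (vC N (k + 1)) = g w' (vC N (k' + 1)))
    \<or> (g w (vC N k) = g w' (vC N (k' + 1)) \<and> g w (vC N (k + 1)) = g w' (vC N k'))"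
    unfolding ends_def by (simp only: doubleton_eq_iff)
  then have "g w (vC N k) + g w (vC N (k + 1)) = g w' (vC N k') + g w' (vC N (k' + 1))"
    by (elim disjE conjE) (simp_all add: add.commute)
  then have "midp w k = midp w' k'" unfolding midp_eq[OF w(1)] midp_eq[OF w(2)] by simp
  then show ?thesis using e by simp
qed

lemma ends_side: "x \<in> ends w k \<Longrightarrow> w \<in> W \<Longrightarrow> x \<in> g w ` seg N k"
  unfolding ends_def seg_def by auto

lemma Mk_seg: "Mk k \<in> seg N k"
proof -
  have "Mk k = (1 - 1/2) *\<^sub>R vC N k + (1/2) *\<^sub>R vC N (k + 1)"
    unfolding Mk_def by (simp add: scaleR_conv_of_real field_simps)
  then show ?thesis unfolding seg_def in_segment by (intro CollectI exI[of _ "1/2"]) auto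
qed

lemma midp_side: "midp w k \<in> g w ` seg N k"
  unfolding midp_def using Mk_seg by blast

lemma Mid_eq:
  assumes w: "w \<in> W" and k: "k \<in> KK" and x: "x \<in> ends w k"
  shows "Mid x = midp w k"
  unfolding Mid_def
proof (rule the_equality)
  show "\<exists>w'\<in>W. \<exists>k'\<in>KK. x \<in> ends w' k' \<and> midp w k = midp w' k'" using w k x by blast
  fix M assume "\<exists>w'\<in>W. \<exists>k'\<in>KK. x \<in> ends w' k' \<and> M = midp w' k'"
  then obtain w' k' where h: "w' \<in> W" "k' \<in> KK" "x \<in> ends w' k'" "M = midp w' k'" by blast
  have "g w ` seg N k \<inter> g w' ` seg N k' \<noteq> {}" using ends_side[OF x w] ends_side[OF h(3) h(1)] by blast
  then show "M = midp w k" using sideU[OF w h(1) k h(2)] h(4) by simp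
qed

lemma Ends_eq:
  assumes w: "w \<in> W" and k: "k \<in> KK"
  shows "Ends (midp w k) = ends w k"
  unfolding Ends_def
proof (rule the_equality)
  show "\<exists>w'\<in>W. \<exists>k'\<in>KK. midp w k = midp w' k' \<and> ends w k = ends w' k'" using w k by blast
  fix S assume "\<exists>w'\<in>W. \<exists>k'\<in>KK. midp w k = midp w' k' \<and> S = ends w' k'"
  then obtain w' k' where h: "w' \<in> W" "k' \<in> KK" "midp w k = midp w' k'" "S = ends w' k'" by blast
  have "g w ` seg N k \<inter> g w' ` seg N k' \<noteq> {}" using midp_side[of w k] midp_side[of w' k'] h(3) by auto
  then show "S = ends w k" using sideU[OF w h(1) k h(2)] h(4) by simp
qed

lemma ends_card: "w \<in> W \<Longrightarrow> card (ends w k) = 2"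
  unfolding ends_def using vC_neq_succ[of k] sim_inj[OF gsim] by (auto simp: inj_eq)

lemma ends_two: "w \<in> W \<Longrightarrow> \<exists>P Q. P \<noteq> Q \<and> ends w k = {P, Q}"
proof -
  assume w: "w \<in> W"
  have "g w (vC N k) \<noteq> g w (vC N (k + 1))" using vC_neq_succ[of k] sim_inj[OF gsim[OF w]] by (auto simp: inj_eq)
  then show ?thesis unfolding ends_def by blast
qed

lemma cen_not_side: "w \<in> W \<Longrightarrow> w' \<in> W \<Longrightarrow> k \<in> KK \<Longrightarrow> g w 0 \<notin> g w' ` seg N k"
  using S_facts(3)[OF m1] unfolding InvE_def by blast

lemma Cen_not_ends: "w' \<in> W \<Longrightarrow> k \<in> KK \<Longrightarrow> x \<in> ends w' k \<Longrightarrow> x \<notin> Cen"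
proof
  assume w': "w' \<in> W" and k: "k \<in> KK" and x: "x \<in> ends w' k" and "x \<in> Cen"
  then obtain w where w: "w \<in> W" "x = g w 0" unfolding Cen_def by blast
  then show False using cen_not_side[OF w(1) w' k] ends_side[OF x w'] by simp
qed

lemma Cen_not_midp: "w' \<in> W \<Longrightarrow> k \<in> KK \<Longrightarrow> midp w' k \<notin> Cen"
proof
  assume w': "w' \<in> W" and k: "k \<in> KK" and "midp w' k \<in> Cen"
  then obtain w where w: "w \<in> W" "midp w' k = g w 0" unfolding Cen_def by blast
  then show False using cen_not_side[OF w(1) w' k] midp_side[of w' k] by simp
qed

end

context NM
begin

lemma finite_W: "finite W"
proof -
  have "W = {xs. set xs \<subseteq> Lam N \<and> length xs = m}" unfolding words_def by auto
  then show ?thesis using finite_lists_length_eq[of "Lam N" m] unfolding Lam_def by simp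
qed

lemma KK2: "{0, 1, N, N + 1, 3 * N - 1, 3 * N} = KK \<union> Suc ` KK"
  unfolding KK_def using N2 by auto

lemma Em_img: "Em N ((\<lambda>j. (0, F j)) ` J) m = {(g w 0, g w (F j)) | w j. w \<in> W \<and> j \<in> J}"
proof
  show "Em N ((\<lambda>j. (0, F j)) ` J) m \<subseteq> {(g w 0, g w (F j)) | w j. w \<in> W \<and> j \<in> J}"
  proof
    fix d assume "d \<in> Em N ((\<lambda>j. (0, F j)) ` J) m"
    then obtain w e where we: "w \<in> W" "e \<in> (\<lambda>j. (0, F j)) ` J" "d = (g w (fst e), g w (snd e))"
      unfolding Em_def by auto
    then obtain j where "j \<in> J" "e = (0, F j)" by blast
    then show "d \<in> {(g w 0, g w (F j)) | w j. w \<in> W \<and> j \<in> J}" using we by auto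
  qed
  show "{(g w 0, g w (F j)) | w j. w \<in> W \<and> j \<in> J} \<subseteq> Em N ((\<lambda>j. (0, F j)) ` J) m"
  proof
    fix d assume "d \<in> {(g w 0, g w (F j)) | w j. w \<in> W \<and> j \<in> J}"
    then obtain w j where wj: "w \<in> W" "j \<in> J" "d = (g w 0, g w (F j))" by blast
    then have "(w, (0, F j)) \<in> W \<times> (\<lambda>j. (0, F j)) ` J" by blast
    moreover have "d = (\<lambda>(w, e). (g w (fst e), g w (snd e))) (w, (0, F j))" using wj by simp
    ultimately show "d \<in> Em N ((\<lambda>j. (0, F j)) ` J) m" unfolding Em_def by (rule rev_image_eqI)
  qed
qed

lemma Vm_img: "Vm N (insert 0 (F ` J)) m = Cen \<union> {g w (F j) | w j. w \<in> W \<and> j \<in> J}"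
  unfolding Vm_def Cen_def by blast

lemma EG0_eq: "EG0 N = (\<lambda>j. (0, Mk j)) ` KK"
  unfolding EG0_def Mk_def KK_def by simp

lemma ED0_eq: "ED0 N = (\<lambda>j. (0, vC N j)) ` (KK \<union> Suc ` KK)"
  unfolding ED0_def KK2[symmetric] by simp

lemma VG0_eq: "VG0 N = insert 0 (Mk ` KK)"
  unfolding VG0_def Mk_def KK_def by simp

lemma VD0_eq: "VD0 N = insert 0 (vC N ` (KK \<union> Suc ` KK))"
  unfolding VD0_def KK2[symmetric] by simp

lemma EG_eq: "Em N (EG0 N) m = {(g w 0, midp w k) | w k. w \<in> W \<and> k \<in> KK}"
  unfolding EG0_eq Em_img midp_def ..

lemma ends_iff: "x \<in> ends w k \<longleftrightarrow> x = g w (vC N k) \<or> x = g w (vC N (Suc k))"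
  unfolding ends_def by auto

lemma ED_eq: "Em N (ED0 N) m = {(g w 0, x) | w k x. w \<in> W \<and> k \<in> KK \<and> x \<in> ends w k}"
  unfolding ED0_eq Em_img ends_iff by blast

lemma VG_eq: "Vm N (VG0 N) m = Cen \<union> {midp w k | w k. w \<in> W \<and> k \<in> KK}"
  unfolding VG0_eq Vm_img midp_def ..

lemma VD_eq: "Vm N (VD0 N) m = Cen \<union> {x | w k x. w \<in> W \<and> k \<in> KK \<and> x \<in> ends w k}"
  unfolding VD0_eq Vm_img ends_iff by blast

abbreviation EG where "EG \<equiv> Em N (EG0 N) m"
abbreviation ED where "ED \<equiv> Em N (ED0 N) m"

lemma finite_EG: "finite EG"
  unfolding Em_def EG0_def using finite_W by simp

lemma finite_ED: "finite ED"
  unfolding Em_def ED0_def using finite_W by simp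

definition ff :: "complex \<times> complex \<Rightarrow> complex \<times> complex" where
  "ff e = (fst e, Mid (snd e))"

lemma ff_img: "ff ` ED \<subseteq> EG"
proof
  fix d assume "d \<in> ff ` ED"
  then obtain w k x where h: "w \<in> W" "k \<in> KK" "x \<in> ends w k" "d = ff (g w 0, x)"
    unfolding ED_eq by blast
  then have "d = (g w 0, midp w k)" unfolding ff_def using Mid_eq by simp
  then show "d \<in> EG" unfolding EG_eq using h by blast
qed

lemma fiber:
  assumes e: "e \<in> EG"
  shows "{x \<in> ED. ff x = e} = (\<lambda>x. (fst e, x)) ` Ends (snd e)"
proof -
  obtain w k where wk: "w \<in> W" "k \<in> KK" "e = (g w 0, midp w k)" using e unfolding EG_eq by blast
  have En: "Ends (snd e) = ends w k" using Ends_eq[OF wk(1,2)] wk(3) by simp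
  show ?thesis
  proof
    show "{x \<in> ED. ff x = e} \<subseteq> (\<lambda>x. (fst e, x)) ` Ends (snd e)"
    proof
      fix d assume d: "d \<in> {x \<in> ED. ff x = e}"
      then obtain w' k' x where h: "w' \<in> W" "k' \<in> KK" "x \<in> ends w' k'" "d = (g w' 0, x)"
        unfolding ED_eq by blast
      have "ff d = (g w' 0, midp w' k')" unfolding ff_def h(4) using Mid_eq[OF h(1,2,3)] by simp
      then have "g w' 0 = g w 0" "midp w' k' = midp w k" using d wk(3) by auto
      then have "Ends (midp w k) = ends w' k'" using Ends_eq[OF h(1,2)] by simp
      then have "x \<in> Ends (snd e)" using h(3) wk(3) by simp
      then show "d \<in> (\<lambda>x. (fst e, x)) ` Ends (snd e)" using h(4) wk(3) \<open>g w' 0 = g w 0\<close> by auto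
    qed
    show "(\<lambda>x. (fst e, x)) ` Ends (snd e) \<subseteq> {x \<in> ED. ff x = e}"
    proof
      fix d assume "d \<in> (\<lambda>x. (fst e, x)) ` Ends (snd e)"
      then obtain x where x: "x \<in> ends w k" "d = (g w 0, x)" using En wk(3) by auto
      have "d \<in> ED" unfolding ED_eq using wk x by blast
      moreover have "ff d = e" unfolding ff_def x(2) using Mid_eq[OF wk(1,2) x(1)] wk(3) by simp
      ultimately show "d \<in> {x \<in> ED. ff x = e}" by blast
    qed
  qed
qed

lemma Ends_two: "e \<in> EG \<Longrightarrow> \<exists>P Q. P \<noteq> Q \<and> Ends (snd e) = {P, Q}"
proof -
  assume e: "e \<in> EG"
  obtain w k where wk: "w \<in> W" "k \<in> KK" "e = (g w 0, midp w k)" using e unfolding EG_eq by blast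
  then show ?thesis using Ends_eq[OF wk(1,2)] ends_two[OF wk(1)] by simp
qed

lemma sum_ED: "(\<Sum>d\<in>ED. H d) = (\<Sum>e\<in>EG. \<Sum>x\<in>Ends (snd e). H (fst e, x))"
proof -
  have "(\<Sum>d\<in>ED. H d) = (\<Sum>e\<in>EG. \<Sum>d\<in>{x \<in> ED. ff x = e}. H d)"
    using sum.group[OF finite_ED finite_EG ff_img, of H] by simp
  also have "\<dots> = (\<Sum>e\<in>EG. \<Sum>x\<in>Ends (snd e). H (fst e, x))"
  proof (rule sum.cong[OF refl])
    fix e assume e: "e \<in> EG"
    have "(\<Sum>d\<in>{x \<in> ED. ff x = e}. H d) = (\<Sum>d\<in>(\<lambda>x. (fst e, x)) ` Ends (snd e). H d)"
      unfolding fiber[OF e] ..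
    also have "\<dots> = (\<Sum>x\<in>Ends (snd e). H (fst e, x))"
      by (subst sum.reindex) (auto simp: inj_on_def)
    finally show "(\<Sum>d\<in>{x \<in> ED. ff x = e}. H d) = (\<Sum>x\<in>Ends (snd e). H (fst e, x))" .
  qed
  finally show ?thesis .
qed

end

context NN
begin

lemma AB_disj:
  assumes "i < N" "i' < N"
  shows "seg N (4 * i) \<inter> seg N (4 * i' + 2) = {}"
proof (rule seg_disj)
  define e where "e = (int (4 * i) - int (4 * i' + 2)) mod (4 * int N)"
  have "e mod 4 = (int (4 * i) - int (4 * i' + 2)) mod 4"
    unfolding e_def by (rule mod_mod_cancel) simp
  also have "\<dots> = 2"
  proof -
    have "int (4 * i) - int (4 * i' + 2) = 4 * (int i - int i') - 2" by simp
    moreover have "(4 * (int i - int i') - 2) mod 4 = 2" by presburger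
    ultimately show ?thesis by (simp only:)
  qed
  finally have e2: "e mod 4 = 2" .
  have m3: "(4 * int N - 1) mod 4 = 3"
  proof -
    show ?thesis by presburger
  qed
  show "e \<noteq> 0" using e2 by auto
  show "e \<noteq> 1" using e2 by auto
  show "e \<noteq> 4 * int N - 1" using e2 m3 by auto
qed

end

context NM
begin

definition feas :: "complex set \<Rightarrow> (complex \<Rightarrow> real) \<Rightarrow> bool" where
  "feas VV u \<longleftrightarrow> (\<forall>x\<in>VV \<inter> Aset N m. u x = 0) \<and> (\<forall>x\<in>VV \<inter> Bset N m. u x = 1)"

abbreviation VG where "VG \<equiv> Vm N (VG0 N) m"
abbreviation VD where "VD \<equiv> Vm N (VD0 N) m"

lemma side_Fm: "w \<in> W \<Longrightarrow> g w ` seg N k \<subseteq> Fm N m"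
  using psiw_Fm seg_F0 by blast

lemma side_bdry_gen:
  assumes w: "w \<in> W" and k: "k \<in> KK" and z: "z \<in> g w ` seg N k" and z2: "z \<in> seg N a"
    and a: "even a" "a + 1 < 4 * N"
  shows "g w ` seg N k \<subseteq> seg N a"
proof -
  have S: "g w ` seg N k \<in> sides (g ` W)" using side_in_sides[OF w k] .
  have "InvC (g ` W) a" using S_facts(4)[OF m1 a] .
  then have IC: "\<forall>S\<in>sides (g ` W). S \<inter> seg N a \<noteq> {} \<longrightarrow> S \<subseteq> seg N a" unfolding InvC_def .
  have ne: "g w ` seg N k \<inter> seg N a \<noteq> {}" using z z2 by blast
  show ?thesis using IC[rule_format, OF S ne] .
qed

lemma side_bdry:
  assumes w: "w \<in> W" and k: "k \<in> KK" and z: "z \<in> g w ` seg N k"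
  shows "z \<in> Aset N m \<Longrightarrow> g w ` seg N k \<subseteq> Aset N m"
    and "z \<in> Bset N m \<Longrightarrow> g w ` seg N k \<subseteq> Bset N m"
proof -
  assume "z \<in> Aset N m"
  then obtain i where i: "i < N" "z \<in> seg N (4 * i)" unfolding Aset_def by blast
  have a: "even (4 * i)" "4 * i + 1 < 4 * N" using i(1) by auto
  have sub: "g w ` seg N k \<subseteq> seg N (4 * i)" by (rule side_bdry_gen[OF w k z i(2) a])
  show "g w ` seg N k \<subseteq> Aset N m"
  proof
    fix x assume x: "x \<in> g w ` seg N k"
    then have "x \<in> Fm N m" "x \<in> seg N (4 * i)" using side_Fm[OF w] sub by blast+
    then show "x \<in> Aset N m" unfolding Aset_def using i(1) by blast
  qed
next
  assume "z \<in> Bset N m"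
  then obtain i where i: "i < N" "z \<in> seg N (4 * i + 2)" unfolding Bset_def by blast
  have a: "even (4 * i + 2)" "4 * i + 2 + 1 < 4 * N" using i(1) by auto
  have sub: "g w ` seg N k \<subseteq> seg N (4 * i + 2)" by (rule side_bdry_gen[OF w k z i(2) a])
  show "g w ` seg N k \<subseteq> Bset N m"
  proof
    fix x assume x: "x \<in> g w ` seg N k"
    then have "x \<in> Fm N m" "x \<in> seg N (4 * i + 2)" using side_Fm[OF w] sub by blast+
    then show "x \<in> Bset N m" unfolding Bset_def using i(1) by blast
  qed
qed

lemma Cen_VG: "Cen \<subseteq> VG" unfolding VG_eq by blast
lemma Cen_VD: "Cen \<subseteq> VD" unfolding VD_eq by blast

lemma energy_sum: "energy EE u = (\<Sum>d\<in>EE. (u (fst d) - u (snd d))^2)"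
  unfolding energy_def by (simp add: case_prod_beta)

lemma EG_parts: "e \<in> EG \<Longrightarrow> \<exists>w k. w \<in> W \<and> k \<in> KK \<and> e = (g w 0, midp w k)"
  unfolding EG_eq by blast

lemma dirI:
  assumes u: "feas VG u"
  defines "v \<equiv> (\<lambda>z. if z \<in> Cen then u z else u (Mid z))"
  shows "feas VD v" and "energy ED v = 2 * energy EG u"
proof -
  show "feas VD v" unfolding feas_def
  proof (intro conjI ballI)
    fix x assume x: "x \<in> VD \<inter> Aset N m"
    show "v x = 0"
    proof (cases "x \<in> Cen")
      case True then show ?thesis using u x Cen_VG unfolding feas_def v_def by auto
    next
      case False
      then obtain w k where wk: "w \<in> W" "k \<in> KK" "x \<in> ends w k" using x unfolding VD_eq by blast
      have "g w ` seg N k \<subseteq> Aset N m" using side_bdry(1)[OF wk(1,2) ends_side[OF wk(3,1)]] x by blast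
      then have "midp w k \<in> Aset N m" using midp_side by blast
      moreover have "midp w k \<in> VG" unfolding VG_eq using wk by blast
      ultimately have "u (midp w k) = 0" using u unfolding feas_def by blast
      then show ?thesis using False Mid_eq[OF wk] unfolding v_def by simp
    qed
  next
    fix x assume x: "x \<in> VD \<inter> Bset N m"
    show "v x = 1"
    proof (cases "x \<in> Cen")
      case True then show ?thesis using u x Cen_VG unfolding feas_def v_def by auto
    next
      case False
      then obtain w k where wk: "w \<in> W" "k \<in> KK" "x \<in> ends w k" using x unfolding VD_eq by blast
      have "g w ` seg N k \<subseteq> Bset N m" using side_bdry(2)[OF wk(1,2) ends_side[OF wk(3,1)]] x by blast
      then have "midp w k \<in> Bset N m" using midp_side by blast
      moreover have "midp w k \<in> VG" unfolding VG_eq using wk by blast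
      ultimately have "u (midp w k) = 1" using u unfolding feas_def by blast
      then show ?thesis using False Mid_eq[OF wk] unfolding v_def by simp
    qed
  qed
  have "energy ED v = (\<Sum>e\<in>EG. \<Sum>x\<in>Ends (snd e). (v (fst e) - v x)^2)"
    unfolding energy_sum sum_ED[of "\<lambda>d. (v (fst d) - v (snd d))^2"] by simp
  also have "\<dots> = (\<Sum>e\<in>EG. 2 * (u (fst e) - u (snd e))^2)"
  proof (rule sum.cong[OF refl])
    fix e assume e: "e \<in> EG"
    obtain w k where wk: "w \<in> W" "k \<in> KK" "e = (g w 0, midp w k)" using EG_parts[OF e] by blast
    have En: "Ends (snd e) = ends w k" using Ends_eq[OF wk(1,2)] wk(3) by simp
    have c: "v (fst e) = u (fst e)" using wk unfolding v_def Cen_def by auto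
    have "\<forall>x\<in>Ends (snd e). (v (fst e) - v x)^2 = (u (fst e) - u (snd e))^2"
    proof
      fix x assume "x \<in> Ends (snd e)"
      then have x: "x \<in> ends w k" using En by simp
      then have "v x = u (midp w k)" using Cen_not_ends[OF wk(1,2) x] Mid_eq[OF wk(1,2) x] unfolding v_def by simp
      then show "(v (fst e) - v x)^2 = (u (fst e) - u (snd e))^2" using c wk(3) by simp
    qed
    then have "(\<Sum>x\<in>Ends (snd e). (v (fst e) - v x)^2) = (\<Sum>x\<in>Ends (snd e). (u (fst e) - u (snd e))^2)"
      by (intro sum.cong refl) blast
    also have "\<dots> = 2 * (u (fst e) - u (snd e))^2" using En ends_card[OF wk(1)] by simp
    finally show "(\<Sum>x\<in>Ends (snd e). (v (fst e) - v x)^2) = 2 * (u (fst e) - u (snd e))^2" .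
  qed
  also have "\<dots> = 2 * energy EG u" unfolding energy_sum by (simp add: sum_distrib_left)
  finally show "energy ED v = 2 * energy EG u" .
qed

lemma dirII:
  assumes v: "feas VD v"
  defines "u \<equiv> (\<lambda>z. if z \<in> Cen then v z else (\<Sum>x\<in>Ends z. v x) / 2)"
  shows "feas VG u" and "2 * energy EG u \<le> energy ED v"
proof -
  show "feas VG u" unfolding feas_def
  proof (intro conjI ballI)
    fix z assume z: "z \<in> VG \<inter> Aset N m"
    show "u z = 0"
    proof (cases "z \<in> Cen")
      case True then show ?thesis using v z Cen_VD unfolding feas_def u_def by auto
    next
      case False
      then obtain w k where wk: "w \<in> W" "k \<in> KK" "z = midp w k" using z unfolding VG_eq by blast
      have sA: "g w ` seg N k \<subseteq> Aset N m" using side_bdry(1)[OF wk(1,2) midp_side] z wk(3) by blast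
      have "\<forall>x\<in>ends w k. v x = 0"
      proof
        fix x assume x: "x \<in> ends w k"
        have "x \<in> Aset N m" using sA ends_side[OF x wk(1)] by blast
        moreover have "x \<in> VD" unfolding VD_eq using wk x by blast
        ultimately show "v x = 0" using v unfolding feas_def by blast
      qed
      then show ?thesis using False Ends_eq[OF wk(1,2)] wk(3) unfolding u_def by simp
    qed
  next
    fix z assume z: "z \<in> VG \<inter> Bset N m"
    show "u z = 1"
    proof (cases "z \<in> Cen")
      case True then show ?thesis using v z Cen_VD unfolding feas_def u_def by auto
    next
      case False
      then obtain w k where wk: "w \<in> W" "k \<in> KK" "z = midp w k" using z unfolding VG_eq by blast
      have sB: "g w ` seg N k \<subseteq> Bset N m" using side_bdry(2)[OF wk(1,2) midp_side] z wk(3) by blast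
      have "\<forall>x\<in>ends w k. v x = 1"
      proof
        fix x assume x: "x \<in> ends w k"
        have "x \<in> Bset N m" using sB ends_side[OF x wk(1)] by blast
        moreover have "x \<in> VD" unfolding VD_eq using wk x by blast
        ultimately show "v x = 1" using v unfolding feas_def by blast
      qed
      then have "(\<Sum>x\<in>ends w k. v x) = 2" using ends_card[OF wk(1)] by simp
      then show ?thesis using False Ends_eq[OF wk(1,2)] wk(3) unfolding u_def by simp
    qed
  qed
  have "2 * energy EG u = (\<Sum>e\<in>EG. 2 * (u (fst e) - u (snd e))^2)"
    unfolding energy_sum by (simp add: sum_distrib_left)
  also have "\<dots> \<le> (\<Sum>e\<in>EG. \<Sum>x\<in>Ends (snd e). (v (fst e) - v x)^2)"
  proof (rule sum_mono)
    fix e assume e: "e \<in> EG"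
    obtain w k where wk: "w \<in> W" "k \<in> KK" "e = (g w 0, midp w k)" using EG_parts[OF e] by blast
    obtain P Q where PQ: "P \<noteq> Q" "Ends (snd e) = {P, Q}" using Ends_two[OF e] by blast
    have c: "u (fst e) = v (fst e)" using wk unfolding u_def Cen_def by auto
    have mm: "u (snd e) = (v P + v Q) / 2" using Cen_not_midp[OF wk(1,2)] wk(3) PQ unfolding u_def by simp
    have "2 * (u (fst e) - u (snd e))^2 \<le> (v (fst e) - v P)^2 + (v (fst e) - v Q)^2"
    proof -
      have "(v (fst e) - v P)^2 + (v (fst e) - v Q)^2 - 2 * (v (fst e) - (v P + v Q) / 2)^2 = (v P - v Q)^2 / 2"
        by (simp add: power2_eq_square field_simps)
      then show ?thesis unfolding c mm by (smt (verit) zero_le_power2 divide_nonneg_pos)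
    qed
    also have "\<dots> = (\<Sum>x\<in>Ends (snd e). (v (fst e) - v x)^2)" using PQ by simp
    finally show "2 * (u (fst e) - u (snd e))^2 \<le> (\<Sum>x\<in>Ends (snd e). (v (fst e) - v x)^2)" .
  qed
  also have "\<dots> = energy ED v"
    unfolding energy_sum sum_ED[of "\<lambda>d. (v (fst d) - v (snd d))^2"] by simp
  finally show "2 * energy EG u \<le> energy ED v" .
qed

end

context NM
begin

definition u0 :: "complex \<Rightarrow> real" where
  "u0 z = (if z \<in> (\<Union>i<N. seg N (4 * i + 2)) then 1 else 0)"

lemma u0_feas: "feas VV u0"
  unfolding feas_def
proof (intro conjI ballI)
  fix x assume "x \<in> VV \<inter> Aset N m"
  then obtain i where i: "i < N" "x \<in> seg N (4 * i)" unfolding Aset_def by blast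
  have "x \<notin> (\<Union>i<N. seg N (4 * i + 2))" using AB_disj[OF i(1)] i(2) by blast
  then show "u0 x = 0" unfolding u0_def by simp
next
  fix x assume "x \<in> VV \<inter> Bset N m"
  then have "x \<in> (\<Union>i<N. seg N (4 * i + 2))" unfolding Bset_def by blast
  then show "u0 x = 1" unfolding u0_def by simp
qed

lemma energy_nonneg: "0 \<le> energy EE u"
  unfolding energy_sum by (intro sum_nonneg) simp

abbreviation SG where "SG \<equiv> {energy EG u | u. feas VG u}"
abbreviation SD where "SD \<equiv> {energy ED u | u. feas VD u}"

lemma SG_ne: "SG \<noteq> {}" using u0_feas by blast
lemma SD_ne: "SD \<noteq> {}" using u0_feas by blast
lemma SG_bdd: "bdd_below SG" using energy_nonneg by (intro bdd_belowI[of _ 0]) auto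
lemma SD_bdd: "bdd_below SD" using energy_nonneg by (intro bdd_belowI[of _ 0]) auto

lemma Inf_rel: "Inf SD = 2 * Inf SG"
proof (rule antisym)
  have "Inf SD / 2 \<le> Inf SG"
  proof (rule cInf_greatest[OF SG_ne])
    fix x assume "x \<in> SG"
    then obtain u where u: "feas VG u" "x = energy EG u" by blast
    define v where "v = (\<lambda>z. if z \<in> Cen then u z else u (Mid z))"
    have "feas VD v" "energy ED v = 2 * energy EG u" using dirI[OF u(1)] unfolding v_def by auto
    then have "Inf SD \<le> 2 * energy EG u" using cInf_lower[OF _ SD_bdd] by (metis (mono_tags, lifting) mem_Collect_eq)
    then show "Inf SD / 2 \<le> x" using u(2) by simp
  qed
  then show "Inf SD \<le> 2 * Inf SG" by simp
next
  have "2 * Inf SG \<le> Inf SD"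
  proof (rule cInf_greatest[OF SD_ne])
    fix x assume "x \<in> SD"
    then obtain v where v: "feas VD v" "x = energy ED v" by blast
    define u where "u = (\<lambda>z. if z \<in> Cen then v z else (\<Sum>x\<in>Ends z. v x) / 2)"
    have "feas VG u" "2 * energy EG u \<le> energy ED v" using dirII[OF v(1)] unfolding u_def by auto
    moreover have "Inf SG \<le> energy EG u" using cInf_lower[OF _ SG_bdd] \<open>feas VG u\<close> by blast
    ultimately show "2 * Inf SG \<le> x" using v(2) by linarith
  qed
  then show "2 * Inf SG \<le> Inf SD" .
qed

lemma main: "RG N m = 2 * RD N m"
proof -
  have "RG N m = 1 / Inf SG" unfolding RG_def eff_res_def feas_def by simp
  moreover have "RD N m = 1 / Inf SD" unfolding RD_def eff_res_def feas_def by simp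
  ultimately show ?thesis using Inf_rel by simp
qed

end

theorem lemma3p5:
  fixes N m :: nat
  assumes "N \<ge> 2" and "m \<ge> 1"
  shows "RG N m = 2 * RD N m"
proof -
  interpret NM N m using assms by unfold_locales auto
  show ?thesis by (rule main)
qed


end
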